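(* Let $(E,\rho)$ be a weighted space with $E$ locally compact. Let $(\lambda_t)_{t\ge0}$ be a Feller process on $E$ with semigroup of transition probabilities $(p(t))_{t\ge0}$ on $(E,\mathcal{B}(E))$ (so that $P(t)f(x)=\int f(y)p(t)(x,dy)$ defines a Feller semigroup on $C_0(E)$) and with initial distribution $\nu\in\mathcal{M}^\rho(E)$. Suppose there exist $t_0>0$ and $C>0$ such that $\mathbb{E}_x[\rho(\lambda_t)]\le C\rho(x)$ for all $x\in E$ and $0\le t\le t_0$. Then $\tilde P(t)f(x):=\int_E f(y)\,p(t)(x,dy)$ defines a generalized Feller semigroup $(\tilde P(t))_{t\ge0}$ on $\mathscr{B}^\rho(E)$, and $(\lambda_t)$ is a generalized Feller process with respect to its natural filtration and $(\tilde P(t))$, i.e. $\mathbb{E}_\nu[f(\lambda_t)\mid\mathcal{F}^0_s]=\tilde P(t-s)f(\lambda_s)$ a.s. for all $t\ge s\ge 0$, $f\in\mathscr{B}^\rho(E)$. Moreover, for every $x\in E$, with initial distribution $\delta_x$ the same holds with respect to the right-continuous enlargement of the natural filtration.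
   Context: A weighted space is a pair $(E,\rho)$ where $E$ is a completely regular Hausdorff topological space and $\rho:E\to(0,\infty)$ is an admissible weight function, meaning that for every $R\ge 0$ the sublevel set $K_R:=\{x\in E:\rho(x)\le R\}$ is compact. For $f:E\to\mathbb{R}$ put $\|f\|_\rho:=\sup_{x\in E}|f(x)|/\rho(x)$; $\mathscr{B}^\rho(E)$ denotes the closure of $C_b(E)$ with respect to $\|\cdot\|_\rho$ inside $\{f:E\to\mathbb{R}:\|f\|_\rho<\infty\}$. A generalized Feller semigroup on $\mathscr{B}^\rho(E)$ is a family $(P(t))_{t\ge0}$ of bounded linear operators on $\mathscr{B}^\rho(E)$ such that (P1) $P(0)=\mathrm{Id}$; (P2) $P(t+s)=P(s)P(t)$ for all $s,t\ge0$; (P3) $\lim_{t\downarrow0}P(t)f(x)=f(x)$ for all $f\in\mathscr{B}^\rho(E)$, $x\in E$; (P4) there exist $\varepsilon>0$, $C<\infty$ with $\|P(t)\|_{L(\mathscr{B}^\rho(E))}\le C$ for all $t\in[0,\varepsilon]$; (P5) each $P(t)$ is a positive operator. $\mathcal{M}^\rho(E)$ is the set of signed Radon measures $\mu$ on $\mathcal{B}(E)$ with $\int\rho\,d|\mu|<\infty$. A Feller semigroup on $C_0(E)$ is a strongly continuous semigroup of positive contractions on $C_0(E)$ (continuous functions vanishing at infinity, sup norm); a Feller process is a Markov process whose transition semigroup is a Feller semigroup. *)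

theory Defs
  imports "HOL-Analysis.Analysis" "HOL-Probability.Probability"
begin

definition admissible_weight :: "('a::topological_space \<Rightarrow> real) \<Rightarrow> bool" where
  "admissible_weight \<rho> \<longleftrightarrow> (\<forall>x. \<rho> x > 0) \<and> (\<forall>R\<ge>0. compact {x. \<rho> x \<le> R})"

definition rho_norm :: "('a \<Rightarrow> real) \<Rightarrow> ('a \<Rightarrow> real) \<Rightarrow> real" where
  "rho_norm \<rho> f = (SUP x. \<bar>f x\<bar> / \<rho> x)"

definition Cb :: "('a::topological_space \<Rightarrow> real) set" where
  "Cb = {g. continuous_on UNIV g \<and> bounded (range g)}"

definition B_rho :: "('a::topological_space \<Rightarrow> real) \<Rightarrow> ('a \<Rightarrow> real) set" where
  "B_rho \<rho> = {f. bdd_above (range (\<lambda>x. \<bar>f x\<bar> / \<rho> x)) \<and>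
                 (\<forall>\<epsilon>>0. \<exists>g\<in>Cb. bdd_above (range (\<lambda>x. \<bar>f x - g x\<bar> / \<rho> x))
                                \<and> rho_norm \<rho> (\<lambda>x. f x - g x) \<le> \<epsilon>)}"

text \<open>Generalized Feller semigroup on B^rho(E), conditions (P1)--(P5), together
  with the requirement that each Q t is a bounded linear operator on B^rho(E).\<close>
definition gen_feller_semigroup ::
  "('a::topological_space \<Rightarrow> real) \<Rightarrow> (real \<Rightarrow> ('a \<Rightarrow> real) \<Rightarrow> ('a \<Rightarrow> real)) \<Rightarrow> bool" where
  "gen_feller_semigroup \<rho> Q \<longleftrightarrow>
     (\<forall>t\<ge>0. \<forall>f\<in>B_rho \<rho>. Q t f \<in> B_rho \<rho>) \<and>
     (\<forall>t\<ge>0. \<forall>f\<in>B_rho \<rho>. \<forall>g\<in>B_rho \<rho>. \<forall>a b::real.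
         Q t (\<lambda>x. a * f x + b * g x) = (\<lambda>x. a * Q t f x + b * Q t g x)) \<and>
     (\<forall>t\<ge>0. \<exists>K. \<forall>f\<in>B_rho \<rho>. rho_norm \<rho> (Q t f) \<le> K * rho_norm \<rho> f) \<and>
     (\<forall>f\<in>B_rho \<rho>. Q 0 f = f) \<and>
     (\<forall>s\<ge>0. \<forall>t\<ge>0. \<forall>f\<in>B_rho \<rho>. Q (t + s) f = Q s (Q t f)) \<and>
     (\<forall>f\<in>B_rho \<rho>. \<forall>x. ((\<lambda>t. Q t f x) \<longlongrightarrow> f x) (at_right 0)) \<and>
     (\<exists>\<epsilon>>0. \<exists>C. \<forall>t\<in>{0..\<epsilon>}. \<forall>f\<in>B_rho \<rho>. rho_norm \<rho> (Q t f) \<le> C * rho_norm \<rho> f) \<and>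
     (\<forall>t\<ge>0. \<forall>f\<in>B_rho \<rho>. (\<forall>x. f x \<ge> 0) \<longrightarrow> (\<forall>x. Q t f x \<ge> 0))"

definition C0 :: "('a::topological_space \<Rightarrow> real) set" where
  "C0 = {f. continuous_on UNIV f \<and> (\<forall>\<epsilon>>0. compact {x. \<bar>f x\<bar> \<ge> \<epsilon>})}"

definition transition_semigroup :: "(real \<Rightarrow> 'a::topological_space \<Rightarrow> 'a measure) \<Rightarrow> bool" where
  "transition_semigroup p \<longleftrightarrow>
     (\<forall>t\<ge>0. p t \<in> borel \<rightarrow>\<^sub>M prob_algebra borel) \<and>
     (\<forall>x. p 0 x = return borel x) \<and>
     (\<forall>s\<ge>0. \<forall>t\<ge>0. \<forall>x. \<forall>A\<in>sets borel.
         measure (p (s + t) x) A = (\<integral>y. measure (p t y) A \<partial>p s x))"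

text \<open>P(t) f x = int f(y) p(t)(x,dy) is a Feller semigroup on C_0(E):
  it maps C_0 into C_0 and is strongly continuous (positivity and contraction are
  automatic for probability kernels, the semigroup law is Chapman--Kolmogorov).\<close>
definition feller_transition :: "(real \<Rightarrow> 'a::topological_space \<Rightarrow> 'a measure) \<Rightarrow> bool" where
  "feller_transition p \<longleftrightarrow> transition_semigroup p \<and>
     (\<forall>t\<ge>0. \<forall>f\<in>C0. (\<lambda>x. \<integral>y. f y \<partial>p t x) \<in> C0) \<and>
     (\<forall>f\<in>C0. ((\<lambda>t. SUP x. \<bar>(\<integral>y. f y \<partial>p t x) - f x\<bar>) \<longlongrightarrow> 0) (at_right 0))"

definition nat_filtration :: "'w measure \<Rightarrow> (real \<Rightarrow> 'w \<Rightarrow> 'a::topological_space) \<Rightarrow> real \<Rightarrow> 'w measure" where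
  "nat_filtration M X s = sigma (space M)
     (\<Union>u\<in>{0..s}. {X u -` A \<inter> space M | A. A \<in> sets borel})"

definition rc_filtration :: "'w measure \<Rightarrow> (real \<Rightarrow> 'w \<Rightarrow> 'a::topological_space) \<Rightarrow> real \<Rightarrow> 'w measure" where
  "rc_filtration M X s = sigma (space M) (\<Inter>u\<in>{s<..}. sets (nat_filtration M X u))"

definition cadlag_paths :: "'w measure \<Rightarrow> (real \<Rightarrow> 'w \<Rightarrow> 'a::topological_space) \<Rightarrow> bool" where
  "cadlag_paths M X \<longleftrightarrow> (\<forall>\<omega>\<in>space M. \<forall>t\<ge>0.
       ((\<lambda>u. X u \<omega>) \<longlongrightarrow> X t \<omega>) (at_right t) \<and>
       (t > 0 \<longrightarrow> (\<exists>l. ((\<lambda>u. X u \<omega>) \<longlongrightarrow> l) (at_left t))))"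

definition feller_process ::
  "'w measure \<Rightarrow> ('a::topological_space \<Rightarrow> 'w measure) \<Rightarrow> (real \<Rightarrow> 'w \<Rightarrow> 'a)
     \<Rightarrow> (real \<Rightarrow> 'a \<Rightarrow> 'a measure) \<Rightarrow> bool" where
  "feller_process M P X p \<longleftrightarrow>
     feller_transition p \<and>
     P \<in> borel \<rightarrow>\<^sub>M prob_algebra M \<and>
     (\<forall>t\<ge>0. X t \<in> M \<rightarrow>\<^sub>M borel) \<and>
     cadlag_paths M X \<and>
     (\<forall>x. AE \<omega> in P x. X 0 \<omega> = x) \<and>
     (\<forall>x. \<forall>s\<ge>0. \<forall>t\<ge>s. \<forall>A\<in>sets borel.
        AE \<omega> in P x. real_cond_exp (P x) (nat_filtration M X s)
                        (\<lambda>\<omega>'. indicator A (X t \<omega>')) \<omega>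
                      = measure (p (t - s) (X s \<omega>)) A)"

definition radon_prob :: "'a::topological_space measure \<Rightarrow> bool" where
  "radon_prob \<nu> \<longleftrightarrow> prob_space \<nu> \<and> sets \<nu> = sets borel \<and>
     (\<forall>A\<in>sets borel. measure \<nu> A = (SUP K\<in>{K. compact K \<and> K \<subseteq> A}. measure \<nu> K))"

end

theory Submission
  imports Defs
begin

locale GF =
  fixes \<rho> :: "'a::t2_space \<Rightarrow> real" and M :: "'w measure" and P :: "'a \<Rightarrow> 'w measure"
    and X :: "real \<Rightarrow> 'w \<Rightarrow> 'a" and p :: "real \<Rightarrow> 'a \<Rightarrow> 'a measure"
    and \<nu> :: "'a measure" and t0 C :: real
  assumes crs: "completely_regular_space (euclidean :: 'a topology)"
    and lcs: "locally_compact_space (euclidean :: 'a topology)"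
    and adm: "admissible_weight \<rho>"
    and fp: "feller_process M P X p"
    and rad: "radon_prob \<nu>"
    and nuint: "(\<integral>\<^sup>+ x. ennreal (\<rho> x) \<partial>\<nu>) < \<infinity>"
    and t0: "t0 > 0" and Cpos: "C > 0"
    and bnd: "\<forall>x. \<forall>t\<in>{0..t0}. (\<integral>\<^sup>+ \<omega>. ennreal (\<rho> (X t \<omega>)) \<partial>P x) \<le> ennreal (C * \<rho> x)"
begin

lemma rho_pos: "\<rho> x > 0" using adm by (auto simp: admissible_weight_def)

lemma rho_compact: "R \<ge> 0 \<Longrightarrow> compact {x. \<rho> x \<le> R}" using adm by (auto simp: admissible_weight_def)

lemma rho_closed: "closed {x. \<rho> x \<le> R}"
proof (cases "R \<ge> 0")
  case True then show ?thesis using rho_compact compact_imp_closed by blast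
next
  case False then have "{x. \<rho> x \<le> R} = {}" using rho_pos by (smt (verit) empty_Collect_eq)
  then show ?thesis by simp
qed

lemma rho_meas[measurable]: "\<rho> \<in> borel_measurable borel"
  unfolding borel_measurable_iff_le using rho_closed by auto

lemma P_meas: "P \<in> borel \<rightarrow>\<^sub>M prob_algebra M" using fp by (simp add: feller_process_def)
lemma P_sub[measurable]: "P \<in> borel \<rightarrow>\<^sub>M subprob_algebra M" using P_meas measurable_prob_algebraD by blast
lemma P_prob: "prob_space (P x)" using measurable_space[OF P_meas, of x] by (simp add: space_prob_algebra)
lemma sets_P[measurable_cong]: "sets (P x) = sets M" using measurable_space[OF P_meas, of x] by (simp add: space_prob_algebra)
lemma space_P: "space (P x) = space M" using sets_P sets_eq_imp_space_eq by blast

lemma X_meas[measurable]: "t \<ge> 0 \<Longrightarrow> X t \<in> M \<rightarrow>\<^sub>M borel" using fp by (simp add: feller_process_def)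
lemma ft: "feller_transition p" using fp by (simp add: feller_process_def)
lemma ts: "transition_semigroup p" using ft by (simp add: feller_transition_def)
lemma p_meas: "t \<ge> 0 \<Longrightarrow> p t \<in> borel \<rightarrow>\<^sub>M prob_algebra borel" using ts by (simp add: transition_semigroup_def)
lemma p_sub[measurable]: "t \<ge> 0 \<Longrightarrow> p t \<in> borel \<rightarrow>\<^sub>M subprob_algebra borel" using p_meas measurable_prob_algebraD by blast
lemma p_prob: "t \<ge> 0 \<Longrightarrow> prob_space (p t x)" using measurable_space[OF p_meas, of t x] by (simp add: space_prob_algebra)
lemma sets_p[measurable_cong]: "t \<ge> 0 \<Longrightarrow> sets (p t x) = sets borel" using measurable_space[OF p_meas, of t x] by (simp add: space_prob_algebra)
lemma space_p: "t \<ge> 0 \<Longrightarrow> space (p t x) = UNIV" using sets_p sets_eq_imp_space_eq by (metis space_borel)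
lemma p0: "p 0 x = return borel x" using ts by (simp add: transition_semigroup_def)

lemma X0: "AE \<omega> in P x. X 0 \<omega> = x" using fp by (simp add: feller_process_def)
lemma markov_ind: "s \<ge> 0 \<Longrightarrow> t \<ge> s \<Longrightarrow> A \<in> sets borel \<Longrightarrow>
        AE \<omega> in P x. real_cond_exp (P x) (nat_filtration M X s)
                        (\<lambda>\<omega>'. indicator A (X t \<omega>')) \<omega>
                      = measure (p (t - s) (X s \<omega>)) A" using fp by (simp add: feller_process_def)


lemma Hausdorff_eucl: "Hausdorff_space (euclidean :: 'a topology)"
  unfolding Hausdorff_space_def using separation_t2 by (auto simp: disjnt_def)

lemma rho_lb: "\<exists>r>0. \<forall>x. r \<le> \<rho> x"
proof (rule ccontr)
  assume "\<not> ?thesis"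
  then have ne: "\<exists>x. \<rho> x < 1 / (Suc n)" for n
    by (metis not_le of_nat_0_less_iff divide_pos_pos zero_less_Suc zero_less_one)
  define D where "D n = {x. \<rho> x \<le> 1 / Suc n}" for n
  have cs: "compact_space (subtopology euclidean (D 0))"
    using rho_compact[of 1] by (simp add: D_def compact_space_subtopology)
  have "(\<Inter>n. D n) \<noteq> {}"
  proof (rule compact_space_imp_nest[OF cs])
    show "closedin (subtopology euclidean (D 0)) (D n)" for n
    proof -
      have "1 / real (Suc n) \<le> 1 / real (Suc 0)" by simp
      then have "D n \<subseteq> D 0" unfolding D_def by (smt (verit) Collect_mono)
      then show ?thesis using rho_closed by (simp add: closedin_closed D_def) (metis D_def Int_absorb1)
    qed
    show "D n \<noteq> {}" for n using ne[of n] unfolding D_def by (metis (mono_tags) empty_Collect_eq less_eq_real_def)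
    show "decseq D" unfolding decseq_def D_def
    proof (intro allI impI subsetI)
      fix m n x assume "m \<le> n" "x \<in> {x. \<rho> x \<le> 1 / real (Suc n)}"
      moreover have "1 / real (Suc n) \<le> 1 / real (Suc m)" using \<open>m \<le> n\<close> by (simp add: frac_le)
      ultimately show "x \<in> {x. \<rho> x \<le> 1 / real (Suc m)}" by auto
    qed
  qed
  then obtain x where x: "\<forall>n. \<rho> x \<le> 1 / Suc n" by (auto simp: D_def)
  obtain n where "1 / Suc n < \<rho> x" using rho_pos[of x]
    by (metis nat_approx_posE of_nat_Suc)
  with x[rule_format, of n] show False by linarith
qed

lemma bump: fixes K :: "'a set" assumes "compact K"
  shows "\<exists>\<phi>::'a \<Rightarrow> real. continuous_on UNIV \<phi> \<and> (\<forall>x. 0 \<le> \<phi> x \<and> \<phi> x \<le> 1) \<and> (\<forall>x\<in>K. \<phi> x = 1)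
      \<and> (\<exists>L. compact L \<and> (\<forall>x. \<phi> x \<noteq> 0 \<longrightarrow> x \<in> L))"
proof -
  have cK: "compactin euclidean K" using assms by simp
  have H: "Hausdorff_space (euclidean::'a topology) \<or> regular_space (euclidean::'a topology)" using Hausdorff_eucl by simp
  have "\<forall>K::'a set. compactin euclidean K \<longrightarrow> (\<exists>U L. openin euclidean U \<and> compactin euclidean L \<and> closedin euclidean L \<and> K \<subseteq> U \<and> U \<subseteq> L)"
    using iffD1[OF locally_compact_space_compact_closed_compact[OF H] lcs] by simp
  from this[rule_format, OF cK] obtain U L where UL: "openin euclidean U" "compactin euclidean L" "closedin euclidean L" "K \<subseteq> U" "U \<subseteq> L"
    by metis
  have cU: "closedin euclidean (- U)" using UL(1) closed_Compl[of U] by simp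
  have dj: "disjnt K (- U)" using UL(4) by (auto simp: disjnt_def)
  obtain f where f: "continuous_map euclidean (subtopology euclidean {0..1::real}) f"
    "f ` (- U) \<subseteq> {0}" "f ` K \<subseteq> {1}"
    using Urysohn_completely_regular_compact_closed[of 0 1 euclidean K "-U", OF _ crs cK cU dj] by auto
  have c: "continuous_on UNIV f"
    using f(1) unfolding continuous_map_in_subtopology by simp
  have r: "0 \<le> f x \<and> f x \<le> 1" for x using f(1) unfolding continuous_map_in_subtopology by auto
  have z: "f x \<noteq> 0 \<longrightarrow> x \<in> L" for x
  proof (rule impI, rule ccontr)
    assume "f x \<noteq> 0" "x \<notin> L"
    then have "x \<in> - U" using UL(5) by auto
    then have "f x \<in> {0}" using f(2) by blast
    then show False using \<open>f x \<noteq> 0\<close> by simp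
  qed
  have one: "\<forall>x\<in>K. f x = 1" using f(3) by auto
  have cL: "compact L" using UL(2) by simp
  show ?thesis by (intro exI[of _ f] conjI exI[of _ L] allI) (use c r one z cL in auto)
qed


lemma M_ne: "space M \<noteq> {}" using prob_space.not_empty[OF P_prob] space_P by metis




lemma nf_sets_gen: "(\<Union>u\<in>{0..s}. {X u -` A \<inter> space M | A. A \<in> sets borel}) \<subseteq> Pow (space M)"
  by auto

lemma space_nf[simp]: "space (nat_filtration M X s) = space M"
  unfolding nat_filtration_def by (rule space_measure_of[OF nf_sets_gen])

lemma sets_nf: "sets (nat_filtration M X s) = sigma_sets (space M) (\<Union>u\<in>{0..s}. {X u -` A \<inter> space M | A. A \<in> sets borel})"
  unfolding nat_filtration_def by (rule sets_measure_of[OF nf_sets_gen])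

lemma sets_nf_sub: "sets (nat_filtration M X s) \<subseteq> sets M"
  unfolding sets_nf
proof (rule sets.sigma_sets_subset)
  show "(\<Union>u\<in>{0..s}. {X u -` A \<inter> space M | A. A \<in> sets borel}) \<subseteq> sets M"
  proof
    fix S assume "S \<in> (\<Union>u\<in>{0..s}. {X u -` A \<inter> space M | A. A \<in> sets borel})"
    then obtain u A where "u \<in> {0..s}" "A \<in> sets borel" "S = X u -` A \<inter> space M" by blast
    then show "S \<in> sets M" using measurable_sets[OF X_meas[of u]] by auto
  qed
qed

lemma sets_nf_mono: assumes "s \<le> v" shows "sets (nat_filtration M X s) \<subseteq> sets (nat_filtration M X v)"
  unfolding sets_nf
proof (rule sigma_sets_mono', rule subsetI)
  fix S assume "S \<in> (\<Union>u\<in>{0..s}. {X u -` A \<inter> space M | A. A \<in> sets borel})"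
  then obtain u A where "u \<in> {0..s}" "A \<in> sets borel" "S = X u -` A \<inter> space M" by blast
  moreover have "u \<in> {0..v}" using \<open>u \<in> {0..s}\<close> assms by auto
  ultimately show "S \<in> (\<Union>u\<in>{0..v}. {X u -` A \<inter> space M | A. A \<in> sets borel})" by blast
qed

lemma X_meas_nf: assumes u: "0 \<le> u" "u \<le> s" shows "X u \<in> nat_filtration M X s \<rightarrow>\<^sub>M borel"
proof (rule measurableI)
  show "\<omega> \<in> space (nat_filtration M X s) \<Longrightarrow> X u \<omega> \<in> space borel" for \<omega> by simp
  fix A :: "'a set" assume A: "A \<in> sets borel"
  have "X u -` A \<inter> space M \<in> {X u -` A \<inter> space M | A. A \<in> sets borel}" using A by blast
  then have "X u -` A \<inter> space M \<in> (\<Union>u\<in>{0..s}. {X u -` A \<inter> space M | A. A \<in> sets borel})"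
    using u by (intro UN_I[of u]) auto
  then show "X u -` A \<inter> space (nat_filtration M X s) \<in> sets (nat_filtration M X s)"
    unfolding sets_nf space_nf by (rule sigma_sets.Basic)
qed

lemma subalg_nf: "subalgebra (P x) (nat_filtration M X s)"
  unfolding subalgebra_def using sets_nf_sub space_P sets_P by auto

lemma sfs_nf: "sigma_finite_subalgebra (P x) (nat_filtration M X s)"
proof -
  interpret prob_space "P x" by (rule P_prob)
  have "finite_measure_subalgebra (P x) (nat_filtration M X s)"
    by unfold_locales (rule subalg_nf)
  then show ?thesis by (rule finite_measure_subalgebra_is_sigma_finite)
qed

lemma B_in_M: "B \<in> sets (nat_filtration M X s) \<Longrightarrow> B \<in> sets M" using sets_nf_sub by auto

lemma markov_nn_ind:
  assumes s: "0 \<le> s" "s \<le> t" and A: "A \<in> sets borel" and B: "B \<in> sets (nat_filtration M X s)"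
  shows "(\<integral>\<^sup>+\<omega>. indicator B \<omega> * indicator A (X t \<omega>) \<partial>P x)
       = (\<integral>\<^sup>+\<omega>. indicator B \<omega> * emeasure (p (t - s) (X s \<omega>)) A \<partial>P x)"
proof -
  interpret prob_space "P x" by (rule P_prob)
  interpret sigma_finite_subalgebra "P x" "nat_filtration M X s" by (rule sfs_nf)
  have BM: "B \<in> sets M" using B B_in_M by blast
  have t0': "0 \<le> t" "0 \<le> t - s" using s by auto
  note Xm = X_meas[OF s(1)] X_meas[OF t0'(1)]
  have m1[measurable]: "(\<lambda>\<omega>. indicator A (X t \<omega>) :: real) \<in> borel_measurable (P x)"
    using Xm(2) A by (simp add: measurable_cong_sets[OF sets_P refl])
  have int1: "integrable (P x) (\<lambda>\<omega>. indicator A (X t \<omega>) :: real)"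
    by (rule integrable_const_bound[where B=1]) (auto simp: m1)
  have m2: "(\<lambda>\<omega>. measure (p (t - s) (X s \<omega>)) A) \<in> borel_measurable (P x)"
  proof -
    have "(\<lambda>y. measure (p (t - s) y) A) \<in> borel_measurable borel"
      using measurable_measure_prob_algebra[OF A] p_meas[OF t0'(2)] by (rule measurable_compose[rotated])
    then show ?thesis using Xm(1) by (simp add: measurable_cong_sets[OF sets_P refl])
  qed
  have int2: "integrable (P x) (\<lambda>\<omega>. measure (p (t - s) (X s \<omega>)) A)"
    by (rule integrable_const_bound[where B=1]) (auto simp: m2 prob_space.prob_le_1[OF p_prob[OF t0'(2)]])
  have "(\<integral>\<omega>\<in>B. indicator A (X t \<omega>) \<partial>P x) = (\<integral>\<omega>\<in>B. real_cond_exp (P x) (nat_filtration M X s) (\<lambda>\<omega>'. indicator A (X t \<omega>')) \<omega> \<partial>P x)"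
    by (rule real_cond_exp_intA[OF int1 B])
  also have "\<dots> = (\<integral>\<omega>\<in>B. measure (p (t - s) (X s \<omega>)) A \<partial>P x)"
    unfolding set_lebesgue_integral_def
    by (rule integral_cong_AE) (use markov_ind[OF s A, of x] m2 BM in \<open>auto simp: measurable_cong_sets[OF sets_P refl]\<close>)
  finally have eq: "(\<integral>\<omega>. indicator B \<omega> * indicator A (X t \<omega>) \<partial>P x) = (\<integral>\<omega>. indicator B \<omega> * measure (p (t - s) (X s \<omega>)) A \<partial>P x)"
    unfolding set_lebesgue_integral_def by simp
  have "(\<integral>\<^sup>+\<omega>. indicator B \<omega> * indicator A (X t \<omega>) \<partial>P x) = (\<integral>\<^sup>+\<omega>. ennreal (indicator B \<omega> * indicator A (X t \<omega>)) \<partial>P x)"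
    by (intro nn_integral_cong) (auto simp: indicator_def)
  also have "\<dots> = ennreal (\<integral>\<omega>. indicator B \<omega> * indicator A (X t \<omega>) \<partial>P x)"
    by (rule nn_integral_eq_integral) (auto intro!: integrable_mult_indicator[OF _ int1, simplified] simp: BM sets_P)
  also have "\<dots> = ennreal (\<integral>\<omega>. indicator B \<omega> * measure (p (t - s) (X s \<omega>)) A \<partial>P x)" using eq by simp
  also have "\<dots> = (\<integral>\<^sup>+\<omega>. ennreal (indicator B \<omega> * measure (p (t - s) (X s \<omega>)) A) \<partial>P x)"
    by (rule nn_integral_eq_integral[symmetric]) (auto intro!: integrable_mult_indicator[OF _ int2, simplified] simp: BM sets_P)
  also have "\<dots> = (\<integral>\<^sup>+\<omega>. indicator B \<omega> * emeasure (p (t - s) (X s \<omega>)) A \<partial>P x)"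
    by (intro nn_integral_cong) (auto simp: indicator_def finite_measure.emeasure_eq_measure[OF prob_space.finite_measure[OF p_prob[OF t0'(2)]]])
  finally show ?thesis .
qed




lemma markov_nn:
  fixes g :: "'a \<Rightarrow> ennreal"
  assumes s: "0 \<le> s" "s \<le> t" and B: "B \<in> sets (nat_filtration M X s)" and g[measurable]: "g \<in> borel_measurable borel"
  shows "(\<integral>\<^sup>+\<omega>. indicator B \<omega> * g (X t \<omega>) \<partial>P x) = (\<integral>\<^sup>+\<omega>. indicator B \<omega> * (\<integral>\<^sup>+y. g y \<partial>p (t - s) (X s \<omega>)) \<partial>P x)"
proof -
  define Q where "Q = density (P x) (indicator B)"
  have BM: "B \<in> sets M" using B B_in_M by blast
  have ts: "0 \<le> t" "0 \<le> t - s" using s by auto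
  have iB[measurable]: "(indicator B :: 'w \<Rightarrow> ennreal) \<in> borel_measurable (P x)"
    using BM by (simp add: sets_P)
  have sQ: "sets Q = sets M" by (simp add: Q_def sets_P)
  have XtQ: "X t \<in> Q \<rightarrow>\<^sub>M borel" using X_meas[OF ts(1)] by (simp add: measurable_cong_sets[OF sQ refl])
  have XsQ: "X s \<in> Q \<rightarrow>\<^sub>M borel" using X_meas[OF s(1)] by (simp add: measurable_cong_sets[OF sQ refl])
  have XtP: "X t \<in> P x \<rightarrow>\<^sub>M borel" using X_meas[OF ts(1)] by (simp add: measurable_cong_sets[OF sets_P refl])
  have XsP: "X s \<in> P x \<rightarrow>\<^sub>M borel" using X_meas[OF s(1)] by (simp add: measurable_cong_sets[OF sets_P refl])
  define D where "D = distr Q borel (X s)"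
  have sD: "sets D = sets borel" by (simp add: D_def)
  have neD: "space D \<noteq> {}" by (simp add: D_def)
  have pk: "p (t - s) \<in> D \<rightarrow>\<^sub>M subprob_algebra borel"
    using p_sub[OF ts(2)] by (simp add: measurable_cong_sets[OF sD refl])
  have eq: "distr Q borel (X t) = D \<bind> p (t - s)"
  proof (rule measure_eqI)
    show "sets (distr Q borel (X t)) = sets (D \<bind> p (t - s))"
      by (simp add: sets_bind_measurable[OF pk neD])
    fix A assume "A \<in> sets (distr Q borel (X t))"
    then have A[measurable]: "A \<in> sets borel" by simp
    have "emeasure (distr Q borel (X t)) A = emeasure Q (X t -` A \<inter> space Q)"
      by (rule emeasure_distr[OF XtQ A])
    also have "\<dots> = (\<integral>\<^sup>+\<omega>. indicator B \<omega> * indicator (X t -` A \<inter> space M) \<omega> \<partial>P x)"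
      unfolding Q_def space_density space_P
    proof (rule emeasure_density[OF iB])
      show "X t -` A \<inter> space M \<in> sets (P x)"
        using measurable_sets[OF XtP A] by (simp add: space_P)
    qed
    also have "\<dots> = (\<integral>\<^sup>+\<omega>. indicator B \<omega> * indicator A (X t \<omega>) \<partial>P x)"
      by (rule nn_integral_cong) (auto simp: space_P indicator_def)
    also have "\<dots> = (\<integral>\<^sup>+\<omega>. indicator B \<omega> * emeasure (p (t - s) (X s \<omega>)) A \<partial>P x)"
      by (rule markov_nn_ind[OF s A B])
    also have "\<dots> = (\<integral>\<^sup>+\<omega>. emeasure (p (t - s) (X s \<omega>)) A \<partial>Q)"
      unfolding Q_def
    proof (rule nn_integral_density[symmetric, OF iB])
      have "(\<lambda>y. emeasure (p (t - s) y) A) \<in> borel_measurable borel"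
        using measurable_emeasure_subprob_algebra[OF A] p_sub[OF ts(2)] by (rule measurable_compose[rotated])
      then show "(\<lambda>\<omega>. emeasure (p (t - s) (X s \<omega>)) A) \<in> borel_measurable (P x)"
        using XsP by (rule measurable_compose[rotated])
    qed
    also have "\<dots> = (\<integral>\<^sup>+y. emeasure (p (t - s) y) A \<partial>D)"
      unfolding D_def
      by (rule nn_integral_distr[symmetric, OF XsQ]) (simp add: measurable_emeasure_subprob_algebra[OF A] p_sub[OF ts(2)] measurable_compose[OF p_sub[OF ts(2)] measurable_emeasure_subprob_algebra[OF A]])
    also have "\<dots> = emeasure (D \<bind> p (t - s)) A"
      by (rule emeasure_bind[symmetric, OF neD pk A])
    finally show "emeasure (distr Q borel (X t)) A = emeasure (D \<bind> p (t - s)) A" .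
  qed
  have mg: "(\<lambda>y. \<integral>\<^sup>+z. g z \<partial>p (t - s) y) \<in> borel_measurable borel"
    using nn_integral_measurable_subprob_algebra[OF g] p_sub[OF ts(2)] by (rule measurable_compose[rotated])
  have "(\<integral>\<^sup>+\<omega>. indicator B \<omega> * g (X t \<omega>) \<partial>P x) = (\<integral>\<^sup>+\<omega>. g (X t \<omega>) \<partial>Q)"
    unfolding Q_def by (rule nn_integral_density[symmetric, OF iB]) (rule measurable_compose[OF XtP g])
  also have "\<dots> = (\<integral>\<^sup>+y. g y \<partial>distr Q borel (X t))"
    by (rule nn_integral_distr[symmetric, OF XtQ]) simp
  also have "\<dots> = (\<integral>\<^sup>+y. g y \<partial>(D \<bind> p (t - s)))" by (simp add: eq)
  also have "\<dots> = (\<integral>\<^sup>+y. \<integral>\<^sup>+z. g z \<partial>p (t - s) y \<partial>D)"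
    by (rule nn_integral_bind[OF g pk])
  also have "\<dots> = (\<integral>\<^sup>+\<omega>. (\<integral>\<^sup>+z. g z \<partial>p (t - s) (X s \<omega>)) \<partial>Q)"
    unfolding D_def by (rule nn_integral_distr[OF XsQ]) (simp add: mg)
  also have "\<dots> = (\<integral>\<^sup>+\<omega>. indicator B \<omega> * (\<integral>\<^sup>+z. g z \<partial>p (t - s) (X s \<omega>)) \<partial>P x)"
    unfolding Q_def by (rule nn_integral_density[OF iB]) (rule measurable_compose[OF XsP mg])
  finally show ?thesis .
qed




lemma space_in_nf: "space M \<in> sets (nat_filtration M X s)"
  using sets.top[of "nat_filtration M X s"] by simp

lemma markov_nn_all:
  fixes g :: "'a \<Rightarrow> ennreal"
  assumes s: "0 \<le> s" "s \<le> t" and g[measurable]: "g \<in> borel_measurable borel"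
  shows "(\<integral>\<^sup>+\<omega>. g (X t \<omega>) \<partial>P x) = (\<integral>\<^sup>+\<omega>. (\<integral>\<^sup>+y. g y \<partial>p (t - s) (X s \<omega>)) \<partial>P x)"
proof -
  have "(\<integral>\<^sup>+\<omega>. g (X t \<omega>) \<partial>P x) = (\<integral>\<^sup>+\<omega>. indicator (space M) \<omega> * g (X t \<omega>) \<partial>P x)"
    by (rule nn_integral_cong) (simp add: space_P)
  also have "\<dots> = (\<integral>\<^sup>+\<omega>. indicator (space M) \<omega> * (\<integral>\<^sup>+y. g y \<partial>p (t - s) (X s \<omega>)) \<partial>P x)"
    by (rule markov_nn[OF s space_in_nf g])
  also have "\<dots> = (\<integral>\<^sup>+\<omega>. (\<integral>\<^sup>+y. g y \<partial>p (t - s) (X s \<omega>)) \<partial>P x)"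
    by (rule nn_integral_cong) (simp add: space_P)
  finally show ?thesis .
qed

lemma law_nn:
  fixes g :: "'a \<Rightarrow> ennreal"
  assumes t: "0 \<le> t" and g[measurable]: "g \<in> borel_measurable borel"
  shows "(\<integral>\<^sup>+\<omega>. g (X t \<omega>) \<partial>P x) = (\<integral>\<^sup>+y. g y \<partial>p t x)"
proof -
  interpret prob_space "P x" by (rule P_prob)
  have "(\<integral>\<^sup>+\<omega>. g (X t \<omega>) \<partial>P x) = (\<integral>\<^sup>+\<omega>. (\<integral>\<^sup>+y. g y \<partial>p (t - 0) (X 0 \<omega>)) \<partial>P x)"
    by (rule markov_nn_all[OF order_refl t g])
  also have "\<dots> = (\<integral>\<^sup>+\<omega>. (\<integral>\<^sup>+y. g y \<partial>p t x) \<partial>P x)"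
    by (rule nn_integral_cong_AE) (use X0[of x] in auto)
  also have "\<dots> = (\<integral>\<^sup>+y. g y \<partial>p t x)" by (simp add: emeasure_space_1)
  finally show ?thesis .
qed

lemma rho_bnd_t0: assumes "t \<in> {0..t0}" shows "(\<integral>\<^sup>+y. ennreal (\<rho> y) \<partial>p t x) \<le> ennreal (C * \<rho> x)"
proof -
  have "(\<integral>\<^sup>+\<omega>. ennreal (\<rho> (X t \<omega>)) \<partial>P x) \<le> ennreal (C * \<rho> x)" using bnd assms by blast
  moreover have "(\<integral>\<^sup>+\<omega>. ennreal (\<rho> (X t \<omega>)) \<partial>P x) = (\<integral>\<^sup>+y. ennreal (\<rho> y) \<partial>p t x)"
    using assms by (intro law_nn) auto
  ultimately show ?thesis by simp
qed

definition "C' = max C 1"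

lemma rho_bnd_n: "t \<in> {0..real n * t0} \<Longrightarrow> (\<integral>\<^sup>+y. ennreal (\<rho> y) \<partial>p t x) \<le> ennreal (C' ^ n * \<rho> x)"
proof (induction n arbitrary: t x)
  case 0
  then have "t = 0" by simp
  then show ?case by (simp add: p0 nn_integral_return)
next
  case (Suc n)
  have C'1: "1 \<le> C'" "C \<le> C'" by (auto simp: C'_def)
  have pw: "1 \<le> C' ^ n" using C'1 by simp
  show ?case
  proof (cases "t \<le> t0")
    case True
    then have "(\<integral>\<^sup>+y. ennreal (\<rho> y) \<partial>p t x) \<le> ennreal (C * \<rho> x)" using rho_bnd_t0 Suc.prems by auto
    also have "\<dots> \<le> ennreal (C' ^ Suc n * \<rho> x)"
    proof (rule ennreal_leI)
      have "C \<le> C' * C' ^ n" using C'1 pw by (metis Cpos less_le_not_le mult_le_cancel_left1 order.trans)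
      then show "C * \<rho> x \<le> C' ^ Suc n * \<rho> x" using rho_pos[of x] by (simp add: mult_right_mono)
    qed
    finally show ?thesis .
  next
    case False
    define s where "s = t - t0"
    have s: "0 \<le> s" "s \<le> t" "s \<in> {0..real n * t0}" "t - s = t0" using False Suc.prems t0
      by (auto simp: s_def algebra_simps)
    have "(\<integral>\<^sup>+y. ennreal (\<rho> y) \<partial>p t x) = (\<integral>\<^sup>+\<omega>. ennreal (\<rho> (X t \<omega>)) \<partial>P x)"
      using s by (intro law_nn[symmetric]) auto
    also have "\<dots> = (\<integral>\<^sup>+\<omega>. (\<integral>\<^sup>+y. ennreal (\<rho> y) \<partial>p t0 (X s \<omega>)) \<partial>P x)"
      using markov_nn_all[OF s(1,2), of "\<lambda>y. ennreal (\<rho> y)" x] s(4) by simp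
    also have "\<dots> \<le> (\<integral>\<^sup>+\<omega>. ennreal (C * \<rho> (X s \<omega>)) \<partial>P x)"
      by (rule nn_integral_mono) (use rho_bnd_t0[of t0] t0 in auto)
    also have "\<dots> = (\<integral>\<^sup>+\<omega>. ennreal C * ennreal (\<rho> (X s \<omega>)) \<partial>P x)"
      by (rule nn_integral_cong) (use Cpos rho_pos in \<open>simp add: ennreal_mult less_imp_le\<close>)
    also have "\<dots> = ennreal C * (\<integral>\<^sup>+\<omega>. ennreal (\<rho> (X s \<omega>)) \<partial>P x)"
      using s by (intro nn_integral_cmult) (simp add: measurable_cong_sets[OF sets_P refl])
    also have "\<dots> = ennreal C * (\<integral>\<^sup>+y. ennreal (\<rho> y) \<partial>p s x)"
      using s by (subst law_nn) auto
    also have "\<dots> \<le> ennreal C * ennreal (C' ^ n * \<rho> x)"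
      by (rule mult_left_mono) (use Suc.IH[OF s(3)] in auto)
    also have "\<dots> = ennreal (C * (C' ^ n * \<rho> x))" using Cpos rho_pos[of x] C'1 by (simp add: ennreal_mult)
    also have "\<dots> \<le> ennreal (C' ^ Suc n * \<rho> x)"
    proof (rule ennreal_leI)
      have "C * C' ^ n \<le> C' * C' ^ n" using C'1 pw by (intro mult_right_mono) auto
      then show "C * (C' ^ n * \<rho> x) \<le> C' ^ Suc n * \<rho> x" using rho_pos[of x]
        by (simp add: mult_right_mono mult.assoc[symmetric])
    qed
    finally show ?thesis .
  qed
qed

lemma rho_bnd: assumes "0 \<le> t" shows "\<exists>K>0. \<forall>x. (\<integral>\<^sup>+y. ennreal (\<rho> y) \<partial>p t x) \<le> ennreal (K * \<rho> x)"
proof -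
  obtain n where "t / t0 \<le> real n" using real_arch_simple by blast
  then have "t \<in> {0..real n * t0}" using assms t0 by (auto simp: field_simps)
  then show ?thesis using rho_bnd_n[of t n] by (intro exI[of _ "C' ^ n"]) (auto simp: C'_def)
qed




lemma rn_le: fixes f :: "'a \<Rightarrow> real" assumes "bdd_above (range (\<lambda>x. \<bar>f x\<bar> / \<rho> x))" shows "\<bar>f x\<bar> \<le> rho_norm \<rho> f * \<rho> x"
proof -
  have "\<bar>f x\<bar> / \<rho> x \<le> rho_norm \<rho> f" unfolding rho_norm_def using assms by (intro cSUP_upper) auto
  then show ?thesis using rho_pos[of x] by (simp add: pos_divide_le_eq)
qed

lemma rn_least: fixes f :: "'a \<Rightarrow> real" assumes "\<forall>x. \<bar>f x\<bar> \<le> c * \<rho> x"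
  shows "bdd_above (range (\<lambda>x. \<bar>f x\<bar> / \<rho> x))" "rho_norm \<rho> f \<le> c"
proof -
  have le: "\<bar>f x\<bar> / \<rho> x \<le> c" for x using assms rho_pos[of x] by (simp add: pos_divide_le_eq)
  then show "bdd_above (range (\<lambda>x. \<bar>f x\<bar> / \<rho> x))" by (intro bdd_aboveI2[where M=c]) (rule le)
  show "rho_norm \<rho> f \<le> c" unfolding rho_norm_def using le by (intro cSUP_least) auto
qed

lemma rn_nonneg: fixes f :: "'a \<Rightarrow> real" assumes "bdd_above (range (\<lambda>x. \<bar>f x\<bar> / \<rho> x))" shows "0 \<le> rho_norm \<rho> f"
proof -
  have "\<bar>f x\<bar> / \<rho> x \<le> rho_norm \<rho> f" for x unfolding rho_norm_def using assms by (intro cSUP_upper) auto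
  moreover have "0 \<le> \<bar>f x\<bar> / \<rho> x" for x using rho_pos[of x] by simp
  ultimately show ?thesis by (meson order_trans)
qed

lemma B_rho_bound: "f \<in> B_rho \<rho> \<Longrightarrow> \<bar>f x\<bar> \<le> rho_norm \<rho> f * \<rho> x"
  unfolding B_rho_def by (auto intro: rn_le)

lemma B_rho_nn: "f \<in> B_rho \<rho> \<Longrightarrow> 0 \<le> rho_norm \<rho> f"
  unfolding B_rho_def by (auto intro: rn_nonneg)

lemma B_rho_D: assumes "f \<in> B_rho \<rho>" "0 < e" shows "\<exists>g\<in>Cb. \<forall>x. \<bar>f x - g x\<bar> \<le> e * \<rho> x"
proof -
  obtain g where g: "g \<in> Cb" "bdd_above (range (\<lambda>x. \<bar>f x - g x\<bar> / \<rho> x))" "rho_norm \<rho> (\<lambda>x. f x - g x) \<le> e"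
    using assms unfolding B_rho_def by blast
  have "\<bar>f x - g x\<bar> \<le> e * \<rho> x" for x
    using rn_le[OF g(2), of x] g(3) rho_pos[of x] by (meson mult_right_mono less_imp_le order_trans)
  then show ?thesis using g(1) by blast
qed

lemma B_rho_I: fixes f :: "'a \<Rightarrow> real"
  assumes "\<forall>x. \<bar>f x\<bar> \<le> c * \<rho> x" "\<And>e. 0 < e \<Longrightarrow> \<exists>g\<in>Cb. \<forall>x. \<bar>f x - g x\<bar> \<le> e * \<rho> x"
  shows "f \<in> B_rho \<rho>"
  unfolding B_rho_def
proof (intro CollectI conjI allI impI)
  show "bdd_above (range (\<lambda>x. \<bar>f x\<bar> / \<rho> x))" using rn_least(1)[OF assms(1)] .
  fix e :: real assume "0 < e"
  then obtain g where "g \<in> Cb" "\<forall>x. \<bar>f x - g x\<bar> \<le> e * \<rho> x" using assms(2) by blast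
  then show "\<exists>g\<in>Cb. bdd_above (range (\<lambda>x. \<bar>f x - g x\<bar> / \<rho> x)) \<and> rho_norm \<rho> (\<lambda>x. f x - g x) \<le> e"
    using rn_least[of "\<lambda>x. f x - g x" e] by blast
qed

lemma B_rho_meas: assumes "f \<in> B_rho \<rho>" shows "f \<in> borel_measurable borel"
proof -
  have "\<exists>g. g \<in> Cb \<and> (\<forall>x. \<bar>f x - g x\<bar> \<le> (1 / Suc n) * \<rho> x)" for n
    using B_rho_D[OF assms, of "1 / Suc n"] by auto
  then obtain g where g: "\<And>n. g n \<in> Cb" "\<And>n x. \<bar>f x - g n x\<bar> \<le> (1 / Suc n) * \<rho> x" by metis
  show ?thesis
  proof (rule borel_measurable_LIMSEQ_real)
    show "g n \<in> borel_measurable borel" for n using g(1)[of n] by (auto simp: Cb_def intro: borel_measurable_continuous_onI)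
    fix x
    have "(\<lambda>n. (1 / Suc n) * \<rho> x) \<longlonglongrightarrow> 0 * \<rho> x"
      by (intro tendsto_mult tendsto_const) (rule LIMSEQ_Suc[OF lim_inverse_n'[unfolded inverse_eq_divide]])
    then have lim: "(\<lambda>n. (1 / Suc n) * \<rho> x) \<longlonglongrightarrow> 0" by simp
    have "\<forall>n. norm (g n x - f x) \<le> (1 / Suc n) * \<rho> x" using g(2) by (simp add: abs_minus_commute)
    then have "(\<lambda>n. g n x - f x) \<longlonglongrightarrow> 0"
      by (rule Lim_null_comparison[OF always_eventually lim])
    then show "(\<lambda>n. g n x) \<longlonglongrightarrow> f x" by (simp add: LIM_zero_iff)
  qed
qed

lemma C0_bounded: fixes h :: "'b::topological_space \<Rightarrow> real" assumes "h \<in> C0" shows "\<exists>B. \<forall>x. \<bar>h x\<bar> \<le> B"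
proof -
  define S where "S = {x. \<bar>h x\<bar> \<ge> 1}"
  have c: "continuous_on UNIV h" and k: "compact S" using assms by (auto simp: C0_def S_def)
  have "compact (h ` S)" using c k by (meson compact_continuous_image continuous_on_subset subset_UNIV)
  then have "bounded (h ` S)" by (rule compact_imp_bounded)
  then obtain B where B: "\<forall>y\<in>h ` S. norm y \<le> B" unfolding bounded_iff by blast
  have "\<bar>h x\<bar> \<le> max 1 B" for x
  proof (cases "\<bar>h x\<bar> \<ge> 1")
    case True
    then have "x \<in> S" by (simp add: S_def)
    then have "norm (h x) \<le> B" using B by blast
    then show ?thesis by simp
  next
    case False then show ?thesis by simp
  qed
  then show ?thesis by blast
qed

lemma C0_Cb: "h \<in> C0 \<Longrightarrow> h \<in> Cb"
  using C0_bounded[of h] unfolding Cb_def by (auto simp: C0_def bounded_iff)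

lemma Cb_bound: fixes g :: "'b::topological_space \<Rightarrow> real" assumes "g \<in> Cb" shows "\<exists>B\<ge>0. \<forall>x. \<bar>g x\<bar> \<le> B"
proof -
  obtain B where B: "\<forall>y\<in>range g. norm y \<le> B" using assms unfolding Cb_def bounded_iff by blast
  then have "\<bar>g x\<bar> \<le> B" for x by auto
  moreover have "0 \<le> B"
  proof -
    have "norm (g undefined) \<le> B" using B by simp
    then show ?thesis using norm_ge_zero order_trans by blast
  qed
  ultimately show ?thesis by blast
qed

lemma bounded_rho: assumes "\<forall>x. \<bar>g x\<bar> \<le> B" shows "\<exists>c. \<forall>x. \<bar>g x\<bar> \<le> c * \<rho> x"
proof -
  obtain r where r: "r > 0" "\<forall>x. r \<le> \<rho> x" using rho_lb by blast
  have "\<bar>g x\<bar> \<le> (max 0 B / r) * \<rho> x" for x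
  proof -
    have "\<bar>g x\<bar> \<le> max 0 B" using assms by (meson le_max_iff_disj)
    also have "\<dots> = (max 0 B / r) * r" using r by simp
    also have "\<dots> \<le> (max 0 B / r) * \<rho> x" using r by (intro mult_left_mono) auto
    finally show ?thesis .
  qed
  then show ?thesis by blast
qed

lemma Cb_Brho: assumes "g \<in> Cb" shows "g \<in> B_rho \<rho>"
proof -
  obtain B where "\<forall>x. \<bar>g x\<bar> \<le> B" using Cb_bound[OF assms] by blast
  then obtain c where "\<forall>x. \<bar>g x\<bar> \<le> c * \<rho> x" using bounded_rho by blast
  then show ?thesis
  proof (rule B_rho_I)
    fix e :: real assume "0 < e"
    then show "\<exists>g'\<in>Cb. \<forall>x. \<bar>g x - g' x\<bar> \<le> e * \<rho> x" using assms rho_pos by (intro bexI[of _ g]) (auto intro: less_imp_le)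
  qed
qed

lemma C0_dense: assumes "f \<in> B_rho \<rho>" "0 < d" shows "\<exists>h\<in>C0. \<forall>x. \<bar>f x - h x\<bar> \<le> d * \<rho> x"
proof -
  obtain g where g: "g \<in> Cb" "\<forall>x. \<bar>f x - g x\<bar> \<le> (d/2) * \<rho> x" using B_rho_D[OF assms(1), of "d/2"] assms(2) by auto
  obtain B where B: "B \<ge> 0" "\<forall>x. \<bar>g x\<bar> \<le> B" using Cb_bound[OF g(1)] by blast
  define R where "R = 2 * B / d"
  have R: "R \<ge> 0" using B assms(2) by (simp add: R_def)
  obtain \<phi> :: "'a \<Rightarrow> real" and L where \<phi>: "continuous_on UNIV \<phi>" "\<forall>x. 0 \<le> \<phi> x \<and> \<phi> x \<le> 1" "\<forall>x\<in>{x. \<rho> x \<le> R}. \<phi> x = 1"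
    and L: "compact L" "\<forall>x. \<phi> x \<noteq> 0 \<longrightarrow> x \<in> L"
    using bump[OF rho_compact[OF R]] by blast
  have gc: "continuous_on UNIV g" using g(1) by (simp add: Cb_def)
  define h where "h x = g x * \<phi> x" for x
  have hc: "continuous_on UNIV h" unfolding h_def using gc \<phi>(1) by (rule continuous_on_mult)
  have "h \<in> C0" unfolding C0_def
  proof (intro CollectI conjI hc allI impI)
    fix e :: real assume e: "0 < e"
    have cl: "closed {x. e \<le> \<bar>h x\<bar>}"
      by (rule closed_Collect_le) (auto intro: continuous_on_rabs hc continuous_on_const)
    have "{x. e \<le> \<bar>h x\<bar>} = L \<inter> {x. e \<le> \<bar>h x\<bar>}"
    proof (intro set_eqI iffI)
      fix x assume "x \<in> {x. e \<le> \<bar>h x\<bar>}"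
      then have "\<phi> x \<noteq> 0" using e by (auto simp: h_def)
      then show "x \<in> L \<inter> {x. e \<le> \<bar>h x\<bar>}" using L(2) \<open>x \<in> {x. e \<le> \<bar>h x\<bar>}\<close> by blast
    qed blast
    then show "compact {x. e \<le> \<bar>h x\<bar>}" using L(1) cl by (metis compact_Int_closed)
  qed
  moreover have "\<bar>f x - h x\<bar> \<le> d * \<rho> x" for x
  proof -
    have "\<bar>g x - h x\<bar> \<le> (d/2) * \<rho> x"
    proof (cases "\<rho> x \<le> R")
      case True
      then have "h x = g x" using \<phi>(3) by (simp add: h_def)
      then show ?thesis using rho_pos[of x] assms(2) by simp
    next
      case False
      have "g x - h x = g x * (1 - \<phi> x)" by (simp add: h_def algebra_simps)
      then have "\<bar>g x - h x\<bar> = \<bar>g x\<bar> * (1 - \<phi> x)" using \<phi>(2)[rule_format, of x]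
        by (simp add: abs_mult)
      also have "\<dots> \<le> B * 1" using \<phi>(2)[rule_format, of x] B(2)[rule_format, of x]
        by (intro mult_mono) auto
      also have "\<dots> \<le> (d/2) * \<rho> x" using False assms(2) by (simp add: R_def field_simps)
      finally show ?thesis .
    qed
    then show ?thesis using g(2)[rule_format, of x] by linarith
  qed
  ultimately show ?thesis by blast
qed




definition Qt :: "real \<Rightarrow> ('a \<Rightarrow> real) \<Rightarrow> 'a \<Rightarrow> real" where
  "Qt t f x = (\<integral>y. f y \<partial>p t x)"

definition Kt :: "real \<Rightarrow> real" where "Kt t = C' ^ nat \<lceil>t / t0\<rceil>"

lemma Kt_pos: "1 \<le> Kt t" by (simp add: Kt_def C'_def)

lemma rho_int_nn: assumes "0 \<le> t" shows "(\<integral>\<^sup>+y. ennreal (\<rho> y) \<partial>p t x) \<le> ennreal (Kt t * \<rho> x)"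
proof -
  have "t \<in> {0..real (nat \<lceil>t / t0\<rceil>) * t0}"
  proof -
    have "t / t0 \<le> real (nat \<lceil>t / t0\<rceil>)" by linarith
    then have "t \<le> real (nat \<lceil>t / t0\<rceil>) * t0" using t0 by (simp add: pos_divide_le_eq)
    then show ?thesis using assms by auto
  qed
  then show ?thesis unfolding Kt_def by (rule rho_bnd_n)
qed

lemma rho_integrable: assumes "0 \<le> t" shows "integrable (p t x) \<rho>"
proof (rule integrableI_nonneg)
  show "\<rho> \<in> borel_measurable (p t x)" using assms by (simp add: measurable_cong_sets[OF sets_p[OF assms] refl])
  show "AE y in p t x. 0 \<le> \<rho> y" using rho_pos by (simp add: less_imp_le)
  show "(\<integral>\<^sup>+y. ennreal (\<rho> y) \<partial>p t x) < \<infinity>" using rho_int_nn[OF assms, of x] by (simp add: le_less_trans)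
qed

lemma rho_int_le: assumes "0 \<le> t" shows "(\<integral>y. \<rho> y \<partial>p t x) \<le> Kt t * \<rho> x"
proof -
  have "ennreal (\<integral>y. \<rho> y \<partial>p t x) = (\<integral>\<^sup>+y. ennreal (\<rho> y) \<partial>p t x)"
    by (rule nn_integral_eq_integral[symmetric]) (use rho_integrable[OF assms] rho_pos in \<open>auto simp: less_imp_le\<close>)
  also have "\<dots> \<le> ennreal (Kt t * \<rho> x)" by (rule rho_int_nn[OF assms])
  finally show ?thesis using Kt_pos[of t] rho_pos[of x] by (simp add: ennreal_le_iff)
qed

lemma rho_int_le_t0: assumes "t \<in> {0..t0}" shows "(\<integral>y. \<rho> y \<partial>p t x) \<le> C * \<rho> x"
proof -
  have t: "0 \<le> t" using assms by simp
  have "ennreal (\<integral>y. \<rho> y \<partial>p t x) = (\<integral>\<^sup>+y. ennreal (\<rho> y) \<partial>p t x)"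
    by (rule nn_integral_eq_integral[symmetric]) (use rho_integrable[OF t] rho_pos in \<open>auto simp: less_imp_le\<close>)
  also have "\<dots> \<le> ennreal (C * \<rho> x)" by (rule rho_bnd_t0[OF assms])
  finally show ?thesis using Cpos rho_pos[of x] by (simp add: ennreal_le_iff)
qed

lemma dom_integrable: fixes f :: "'a \<Rightarrow> real"
  assumes t: "0 \<le> t" and f: "f \<in> borel_measurable borel" and b: "\<forall>y. \<bar>f y\<bar> \<le> c * \<rho> y"
  shows "integrable (p t x) f"
proof (rule Bochner_Integration.integrable_bound[of _ "\<lambda>y. c * \<rho> y"])
  show "integrable (p t x) (\<lambda>y. c * \<rho> y)" using rho_integrable[OF t] by simp
  show "f \<in> borel_measurable (p t x)" using f by (simp add: measurable_cong_sets[OF sets_p[OF t] refl])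
  show "AE y in p t x. norm (f y) \<le> norm (c * \<rho> y)" using b by (auto intro: order_trans abs_ge_self)
qed

lemma Qt_bound_gen: fixes f :: "'a \<Rightarrow> real"
  assumes t: "0 \<le> t" and f: "f \<in> borel_measurable borel" and b: "\<forall>y. \<bar>f y\<bar> \<le> c * \<rho> y"
  shows "\<bar>Qt t f x\<bar> \<le> c * (\<integral>y. \<rho> y \<partial>p t x)"
proof -
  have "norm (\<integral>y. f y \<partial>p t x) \<le> (\<integral>y. norm (f y) \<partial>p t x)" by (rule integral_norm_bound)
  also have "\<dots> \<le> (\<integral>y. c * \<rho> y \<partial>p t x)"
    by (rule integral_mono) (use dom_integrable[OF t f b] rho_integrable[OF t] b in auto)
  finally show ?thesis by (simp add: Qt_def)
qed

lemma Qt_bound: fixes f :: "'a \<Rightarrow> real"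
  assumes t: "0 \<le> t" and f: "f \<in> borel_measurable borel" and b: "\<forall>y. \<bar>f y\<bar> \<le> c * \<rho> y"
  shows "\<bar>Qt t f x\<bar> \<le> c * Kt t * \<rho> x"
proof -
  have c: "0 \<le> c" using b[rule_format, of x] rho_pos[of x] by (meson abs_ge_zero order_trans zero_le_mult_iff not_le less_imp_le)
  have "\<bar>Qt t f x\<bar> \<le> c * (\<integral>y. \<rho> y \<partial>p t x)" by (rule Qt_bound_gen[OF assms])
  also have "\<dots> \<le> c * (Kt t * \<rho> x)" using c rho_int_le[OF t] by (rule mult_left_mono[rotated])
  finally show ?thesis by (simp add: mult.assoc)
qed

lemma Qt_bound_t0: fixes f :: "'a \<Rightarrow> real"
  assumes t: "t \<in> {0..t0}" and f: "f \<in> borel_measurable borel" and b: "\<forall>y. \<bar>f y\<bar> \<le> c * \<rho> y"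
  shows "\<bar>Qt t f x\<bar> \<le> c * C * \<rho> x"
proof -
  have t': "0 \<le> t" using t by simp
  have c: "0 \<le> c" using b[rule_format, of x] rho_pos[of x] by (meson abs_ge_zero order_trans zero_le_mult_iff not_le less_imp_le)
  have "\<bar>Qt t f x\<bar> \<le> c * (\<integral>y. \<rho> y \<partial>p t x)" by (rule Qt_bound_gen[OF t' f b])
  also have "\<dots> \<le> c * (C * \<rho> x)" using c rho_int_le_t0[OF t] by (rule mult_left_mono[rotated])
  finally show ?thesis by (simp add: mult.assoc)
qed

lemma Qt_meas: fixes f :: "'a \<Rightarrow> real"
  assumes t: "0 \<le> t" and f: "f \<in> borel_measurable borel"
  shows "Qt t f \<in> borel_measurable borel"
proof -
  have "(\<lambda>y. \<integral>z. f z \<partial>p t y) \<in> borel_measurable borel"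
    using integral_measurable_subprob_algebra[OF f] p_sub[OF t] by (rule measurable_compose[rotated])
  then show ?thesis by (simp add: Qt_def[abs_def])
qed

lemma Qt_nn: fixes g :: "'a \<Rightarrow> real"
  assumes t: "0 \<le> t" and g: "g \<in> borel_measurable borel" and b: "\<forall>y. \<bar>g y\<bar> \<le> c * \<rho> y" and pos: "\<forall>y. 0 \<le> g y"
  shows "ennreal (Qt t g x) = (\<integral>\<^sup>+y. ennreal (g y) \<partial>p t x)"
  unfolding Qt_def by (rule nn_integral_eq_integral[symmetric]) (use dom_integrable[OF t g b] pos in auto)




lemma nn_eq_int: fixes h1 h2 :: "'w \<Rightarrow> real"
  assumes m: "h1 \<in> borel_measurable W" "h2 \<in> borel_measurable W" and pos: "\<forall>\<omega>. 0 \<le> h1 \<omega>" "\<forall>\<omega>. 0 \<le> h2 \<omega>"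
    and eq: "(\<integral>\<^sup>+\<omega>. ennreal (h1 \<omega>) \<partial>W) = (\<integral>\<^sup>+\<omega>. ennreal (h2 \<omega>) \<partial>W)"
    and fin: "(\<integral>\<^sup>+\<omega>. ennreal (h1 \<omega>) \<partial>W) < \<infinity>"
  shows "integrable W h1" "integrable W h2" "(\<integral>\<omega>. h1 \<omega> \<partial>W) = (\<integral>\<omega>. h2 \<omega> \<partial>W)"
proof -
  show "integrable W h1" using m(1) pos(1) fin by (intro integrableI_nonneg) auto
  show "integrable W h2" using m(2) pos(2) fin eq by (intro integrableI_nonneg) auto
  show "(\<integral>\<omega>. h1 \<omega> \<partial>W) = (\<integral>\<omega>. h2 \<omega> \<partial>W)"
    using m pos eq by (simp add: integral_eq_nn_integral)
qed

lemma c_nonneg: fixes f :: "'a \<Rightarrow> real" assumes "\<forall>y. \<bar>f y\<bar> \<le> c * \<rho> y" shows "0 \<le> c"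
proof -
  have "0 \<le> c * \<rho> undefined" using assms abs_ge_zero order_trans by blast
  then show ?thesis using rho_pos[of undefined] by (simp add: zero_le_mult_iff)
qed

lemma real_markov_pos:
  fixes W :: "'w measure" and g :: "'a \<Rightarrow> real"
  assumes sW: "sets W = sets M" and st: "0 \<le> s" "s \<le> t" and BM: "B \<in> sets M"
    and nnm: "\<And>g :: 'a \<Rightarrow> ennreal. g \<in> borel_measurable borel \<Longrightarrow>
        (\<integral>\<^sup>+\<omega>. indicator B \<omega> * g (X t \<omega>) \<partial>W) = (\<integral>\<^sup>+\<omega>. indicator B \<omega> * (\<integral>\<^sup>+y. g y \<partial>p (t - s) (X s \<omega>)) \<partial>W)"
    and fin: "(\<integral>\<^sup>+\<omega>. ennreal (\<rho> (X t \<omega>)) \<partial>W) < \<infinity>"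
    and g: "g \<in> borel_measurable borel" and b: "\<forall>y. \<bar>g y\<bar> \<le> c * \<rho> y" and pos: "\<forall>y. 0 \<le> g y"
  shows "integrable W (\<lambda>\<omega>. indicator B \<omega> * g (X t \<omega>))" "integrable W (\<lambda>\<omega>. indicator B \<omega> * Qt (t - s) g (X s \<omega>))"
    "(\<integral>\<omega>. indicator B \<omega> * g (X t \<omega>) \<partial>W) = (\<integral>\<omega>. indicator B \<omega> * Qt (t - s) g (X s \<omega>) \<partial>W)"
proof -
  have ts: "0 \<le> t" "0 \<le> t - s" using st by auto
  have c: "0 \<le> c" by (rule c_nonneg[OF b])
  have XtW[measurable]: "X t \<in> W \<rightarrow>\<^sub>M borel" using X_meas[OF ts(1)] by (simp add: measurable_cong_sets[OF sW refl])
  have XsW[measurable]: "X s \<in> W \<rightarrow>\<^sub>M borel" using X_meas[OF st(1)] by (simp add: measurable_cong_sets[OF sW refl])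
  have BW[measurable]: "B \<in> sets W" using BM sW by simp
  have Qm[measurable]: "Qt (t - s) g \<in> borel_measurable borel" by (rule Qt_meas[OF ts(2) g])
  have [measurable]: "g \<in> borel_measurable borel" by (rule g)
  have m1: "(\<lambda>\<omega>. indicator B \<omega> * g (X t \<omega>)) \<in> borel_measurable W" by measurable
  have m2: "(\<lambda>\<omega>. indicator B \<omega> * Qt (t - s) g (X s \<omega>)) \<in> borel_measurable W" by measurable
  have Qpos: "0 \<le> Qt (t - s) g y" for y unfolding Qt_def using pos by (simp add: integral_nonneg_AE)
  have "(\<integral>\<^sup>+\<omega>. ennreal (indicator B \<omega> * g (X t \<omega>)) \<partial>W) = (\<integral>\<^sup>+\<omega>. indicator B \<omega> * ennreal (g (X t \<omega>)) \<partial>W)"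
    by (rule nn_integral_cong) (simp add: indicator_def)
  also have "\<dots> = (\<integral>\<^sup>+\<omega>. indicator B \<omega> * (\<integral>\<^sup>+y. ennreal (g y) \<partial>p (t - s) (X s \<omega>)) \<partial>W)"
    by (rule nnm) simp
  also have "\<dots> = (\<integral>\<^sup>+\<omega>. ennreal (indicator B \<omega> * Qt (t - s) g (X s \<omega>)) \<partial>W)"
    by (rule nn_integral_cong) (simp add: indicator_def Qt_nn[OF ts(2) g b pos])
  finally have eq: "(\<integral>\<^sup>+\<omega>. ennreal (indicator B \<omega> * g (X t \<omega>)) \<partial>W) = (\<integral>\<^sup>+\<omega>. ennreal (indicator B \<omega> * Qt (t - s) g (X s \<omega>)) \<partial>W)" .
  have "(\<integral>\<^sup>+\<omega>. ennreal (indicator B \<omega> * g (X t \<omega>)) \<partial>W) \<le> (\<integral>\<^sup>+\<omega>. ennreal c * ennreal (\<rho> (X t \<omega>)) \<partial>W)"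
  proof (rule nn_integral_mono)
    fix \<omega>
    have "indicator B \<omega> * g (X t \<omega>) \<le> c * \<rho> (X t \<omega>)" using b pos c rho_pos[of "X t \<omega>"] by (auto simp: indicator_def)
    then show "ennreal (indicator B \<omega> * g (X t \<omega>)) \<le> ennreal c * ennreal (\<rho> (X t \<omega>))"
      using c rho_pos[of "X t \<omega>"] by (subst ennreal_mult[symmetric]) (auto intro: ennreal_leI)
  qed
  also have "\<dots> = ennreal c * (\<integral>\<^sup>+\<omega>. ennreal (\<rho> (X t \<omega>)) \<partial>W)" by (rule nn_integral_cmult) simp
  also have "\<dots> < \<infinity>" using fin by (simp add: ennreal_mult_less_top)
  finally have fin1: "(\<integral>\<^sup>+\<omega>. ennreal (indicator B \<omega> * g (X t \<omega>)) \<partial>W) < \<infinity>" .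
  have p1: "\<forall>\<omega>. 0 \<le> indicator B \<omega> * g (X t \<omega>)" using pos by simp
  have p2: "\<forall>\<omega>. 0 \<le> indicator B \<omega> * Qt (t - s) g (X s \<omega>)" using Qpos by simp
  note r = nn_eq_int[OF m1 m2 p1 p2 eq fin1]
  show "integrable W (\<lambda>\<omega>. indicator B \<omega> * g (X t \<omega>))" by (rule r(1))
  show "integrable W (\<lambda>\<omega>. indicator B \<omega> * Qt (t - s) g (X s \<omega>))" by (rule r(2))
  show "(\<integral>\<omega>. indicator B \<omega> * g (X t \<omega>) \<partial>W) = (\<integral>\<omega>. indicator B \<omega> * Qt (t - s) g (X s \<omega>) \<partial>W)" by (rule r(3))
qed


lemma Qt_diff: fixes f g :: "'a \<Rightarrow> real"
  assumes t: "0 \<le> t" and f: "f \<in> borel_measurable borel" "g \<in> borel_measurable borel"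
    and b: "\<forall>y. \<bar>f y\<bar> \<le> c * \<rho> y" "\<forall>y. \<bar>g y\<bar> \<le> c' * \<rho> y"
  shows "Qt t (\<lambda>y. f y - g y) x = Qt t f x - Qt t g x"
  unfolding Qt_def by (rule Bochner_Integration.integral_diff) (rule dom_integrable[OF t f(1) b(1)], rule dom_integrable[OF t f(2) b(2)])

lemma pos_neg_parts: fixes f :: "'a \<Rightarrow> real" assumes "\<forall>y. \<bar>f y\<bar> \<le> c * \<rho> y"
  shows "\<forall>y. \<bar>max 0 (f y)\<bar> \<le> c * \<rho> y" "\<forall>y. \<bar>max 0 (- f y)\<bar> \<le> c * \<rho> y"
    "\<forall>y. 0 \<le> max 0 (f y)" "\<forall>y. 0 \<le> max 0 (- f y)" "\<And>y. f y = max 0 (f y) - max 0 (- f y)"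
proof -
  have "0 \<le> c * \<rho> y" for y using assms abs_ge_zero order_trans by blast
  then show "\<forall>y. \<bar>max 0 (f y)\<bar> \<le> c * \<rho> y" "\<forall>y. \<bar>max 0 (- f y)\<bar> \<le> c * \<rho> y"
    "\<forall>y. 0 \<le> max 0 (f y)" "\<forall>y. 0 \<le> max 0 (- f y)" "\<And>y. f y = max 0 (f y) - max 0 (- f y)"
    using assms by (auto simp: abs_le_iff max_def)
qed

lemma real_markov:
  fixes W :: "'w measure" and f :: "'a \<Rightarrow> real"
  assumes sW: "sets W = sets M" and st: "0 \<le> s" "s \<le> t" and BM: "B \<in> sets M"
    and nnm: "\<And>g :: 'a \<Rightarrow> ennreal. g \<in> borel_measurable borel \<Longrightarrow>
        (\<integral>\<^sup>+\<omega>. indicator B \<omega> * g (X t \<omega>) \<partial>W) = (\<integral>\<^sup>+\<omega>. indicator B \<omega> * (\<integral>\<^sup>+y. g y \<partial>p (t - s) (X s \<omega>)) \<partial>W)"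
    and fin: "(\<integral>\<^sup>+\<omega>. ennreal (\<rho> (X t \<omega>)) \<partial>W) < \<infinity>"
    and f: "f \<in> borel_measurable borel" and b: "\<forall>y. \<bar>f y\<bar> \<le> c * \<rho> y"
  shows "integrable W (\<lambda>\<omega>. indicator B \<omega> * f (X t \<omega>))" "integrable W (\<lambda>\<omega>. indicator B \<omega> * Qt (t - s) f (X s \<omega>))"
    "(\<integral>\<omega>. indicator B \<omega> * f (X t \<omega>) \<partial>W) = (\<integral>\<omega>. indicator B \<omega> * Qt (t - s) f (X s \<omega>) \<partial>W)"
proof -
  define fp where "fp y = max 0 (f y)" for y
  define fm where "fm y = max 0 (- f y)" for y
  note pn = pos_neg_parts[OF b, folded fp_def fm_def]
  have mp: "fp \<in> borel_measurable borel" "fm \<in> borel_measurable borel" using f by (auto simp: fp_def[abs_def] fm_def[abs_def])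
  note P = real_markov_pos[OF sW st BM nnm fin mp(1) pn(1) pn(3)]
  note N = real_markov_pos[OF sW st BM nnm fin mp(2) pn(2) pn(4)]
  have ts: "0 \<le> t - s" using st by simp
  have e1: "indicator B \<omega> * f (X t \<omega>) = indicator B \<omega> * fp (X t \<omega>) - indicator B \<omega> * fm (X t \<omega>)" for \<omega>
    using pn(5)[of "X t \<omega>"] by (metis right_diff_distrib)
  have e2: "indicator B \<omega> * Qt (t - s) f (X s \<omega>) = indicator B \<omega> * Qt (t - s) fp (X s \<omega>) - indicator B \<omega> * Qt (t - s) fm (X s \<omega>)" for \<omega>
  proof -
    have "Qt (t - s) f (X s \<omega>) = Qt (t - s) (\<lambda>y. fp y - fm y) (X s \<omega>)" using pn(5) by metis
    also have "\<dots> = Qt (t - s) fp (X s \<omega>) - Qt (t - s) fm (X s \<omega>)" by (rule Qt_diff[OF ts mp pn(1,2)])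
    finally show ?thesis by (metis right_diff_distrib)
  qed
  show "integrable W (\<lambda>\<omega>. indicator B \<omega> * f (X t \<omega>))" unfolding e1 using P(1) N(1) by (rule Bochner_Integration.integrable_diff)
  show "integrable W (\<lambda>\<omega>. indicator B \<omega> * Qt (t - s) f (X s \<omega>))" unfolding e2 using P(2) N(2) by (rule Bochner_Integration.integrable_diff)
  show "(\<integral>\<omega>. indicator B \<omega> * f (X t \<omega>) \<partial>W) = (\<integral>\<omega>. indicator B \<omega> * Qt (t - s) f (X s \<omega>) \<partial>W)"
    unfolding e1 e2 using P N by (simp add: Bochner_Integration.integral_diff)
qed




lemma ce_charact: fixes h k :: "'w \<Rightarrow> real"
  assumes sfs: "sigma_finite_subalgebra W F" and h: "integrable W h" and k: "integrable W k"
    and kF: "k \<in> borel_measurable F"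
    and eq: "\<And>B. B \<in> sets F \<Longrightarrow> (\<integral>\<omega>. indicator B \<omega> * h \<omega> \<partial>W) = (\<integral>\<omega>. indicator B \<omega> * k \<omega> \<partial>W)"
  shows "AE \<omega> in W. real_cond_exp W F h \<omega> = k \<omega>"
proof -
  interpret sigma_finite_subalgebra W F by (rule sfs)
  show ?thesis
    by (rule real_cond_exp_charact[OF _ h k kF]) (simp add: set_lebesgue_integral_def eq)
qed

lemma fin_P: "0 \<le> t \<Longrightarrow> (\<integral>\<^sup>+\<omega>. ennreal (\<rho> (X t \<omega>)) \<partial>P x) < \<infinity>"
  using law_nn[of t "\<lambda>y. ennreal (\<rho> y)" x] rho_int_nn[of t x] by (simp add: le_less_trans)

lemma nu_prob: "prob_space \<nu>" and sets_nu[measurable_cong]: "sets \<nu> = sets borel" using rad by (auto simp: radon_prob_def)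

lemma nu_space_prob: "\<nu> \<in> space (prob_algebra borel)" using nu_prob sets_nu by (simp add: space_prob_algebra)

lemma P_meas_nu: "P \<in> \<nu> \<rightarrow>\<^sub>M subprob_algebra M" using P_sub by (simp add: measurable_cong_sets[OF sets_nu refl])

lemma nu_ne: "space \<nu> \<noteq> {}" using prob_space.not_empty[OF nu_prob] .

lemma sets_nuP: "sets (\<nu> \<bind> P) = sets M" by (rule sets_bind_measurable[OF P_meas_nu nu_ne])
lemma space_nuP: "space (\<nu> \<bind> P) = space M" by (rule space_bind_measurable[OF P_meas_nu nu_ne])
lemma nuP_prob: "prob_space (\<nu> \<bind> P)" by (rule prob_space_bind'[OF nu_space_prob P_meas])

lemma markov_nn_nu:
  fixes g :: "'a \<Rightarrow> ennreal"
  assumes s: "0 \<le> s" "s \<le> t" and B: "B \<in> sets (nat_filtration M X s)" and g[measurable]: "g \<in> borel_measurable borel"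
  shows "(\<integral>\<^sup>+\<omega>. indicator B \<omega> * g (X t \<omega>) \<partial>(\<nu> \<bind> P)) = (\<integral>\<^sup>+\<omega>. indicator B \<omega> * (\<integral>\<^sup>+y. g y \<partial>p (t - s) (X s \<omega>)) \<partial>(\<nu> \<bind> P))"
proof -
  have BM[measurable]: "B \<in> sets M" using B B_in_M by blast
  have ts: "0 \<le> t" "0 \<le> t - s" using s by auto
  note [measurable] = X_meas[OF ts(1)] X_meas[OF s(1)]
  have mg: "(\<lambda>y. \<integral>\<^sup>+z. g z \<partial>p (t - s) y) \<in> borel_measurable borel"
    using nn_integral_measurable_subprob_algebra[OF g] p_sub[OF ts(2)] by (rule measurable_compose[rotated])
  have m1: "(\<lambda>\<omega>. indicator B \<omega> * g (X t \<omega>)) \<in> borel_measurable M" by measurable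
  have m2: "(\<lambda>\<omega>. indicator B \<omega> * (\<integral>\<^sup>+y. g y \<partial>p (t - s) (X s \<omega>))) \<in> borel_measurable M"
    using mg by measurable
  show ?thesis
    by (simp add: nn_integral_bind[OF m1 P_meas_nu] nn_integral_bind[OF m2 P_meas_nu] markov_nn[OF s B g])
qed

lemma fin_nu: assumes "0 \<le> t" shows "(\<integral>\<^sup>+\<omega>. ennreal (\<rho> (X t \<omega>)) \<partial>(\<nu> \<bind> P)) < \<infinity>"
proof -
  note [measurable] = X_meas[OF assms]
  have m: "(\<lambda>\<omega>. ennreal (\<rho> (X t \<omega>))) \<in> borel_measurable M" by measurable
  have "(\<integral>\<^sup>+\<omega>. ennreal (\<rho> (X t \<omega>)) \<partial>(\<nu> \<bind> P)) = (\<integral>\<^sup>+x. (\<integral>\<^sup>+\<omega>. ennreal (\<rho> (X t \<omega>)) \<partial>P x) \<partial>\<nu>)"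
    by (rule nn_integral_bind[OF m P_meas_nu])
  also have "\<dots> \<le> (\<integral>\<^sup>+x. ennreal (Kt t) * ennreal (\<rho> x) \<partial>\<nu>)"
  proof (rule nn_integral_mono)
    fix x
    have "(\<integral>\<^sup>+\<omega>. ennreal (\<rho> (X t \<omega>)) \<partial>P x) = (\<integral>\<^sup>+y. ennreal (\<rho> y) \<partial>p t x)" by (rule law_nn[OF assms]) simp
    also have "\<dots> \<le> ennreal (Kt t * \<rho> x)" by (rule rho_int_nn[OF assms])
    also have "\<dots> = ennreal (Kt t) * ennreal (\<rho> x)" using Kt_pos[of t] rho_pos[of x] by (simp add: ennreal_mult)
    finally show "(\<integral>\<^sup>+\<omega>. ennreal (\<rho> (X t \<omega>)) \<partial>P x) \<le> ennreal (Kt t) * ennreal (\<rho> x)" .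
  qed
  also have "\<dots> = ennreal (Kt t) * (\<integral>\<^sup>+x. ennreal (\<rho> x) \<partial>\<nu>)"
    by (rule nn_integral_cmult) (simp add: measurable_cong_sets[OF sets_nu refl])
  also have "\<dots> < \<infinity>" using nuint by (simp add: ennreal_mult_less_top)
  finally show ?thesis .
qed

lemma subalg_nf_nu: "subalgebra (\<nu> \<bind> P) (nat_filtration M X s)"
  unfolding subalgebra_def using sets_nf_sub sets_nuP space_nuP by auto

lemma sfs_nf_nu: "sigma_finite_subalgebra (\<nu> \<bind> P) (nat_filtration M X s)"
proof -
  interpret prob_space "\<nu> \<bind> P" by (rule nuP_prob)
  have "finite_measure_subalgebra (\<nu> \<bind> P) (nat_filtration M X s)"
    by unfold_locales (rule subalg_nf_nu)
  then show ?thesis by (rule finite_measure_subalgebra_is_sigma_finite)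
qed

lemma ce_gen:
  fixes W :: "'w measure" and f :: "'a \<Rightarrow> real"
  assumes sfs: "sigma_finite_subalgebra W F" and sW: "sets W = sets M" and st: "0 \<le> s" "s \<le> t"
    and XF: "X s \<in> F \<rightarrow>\<^sub>M borel"
    and nnm: "\<And>B g. B \<in> sets F \<Longrightarrow> (g :: 'a \<Rightarrow> ennreal) \<in> borel_measurable borel \<Longrightarrow>
        (\<integral>\<^sup>+\<omega>. indicator B \<omega> * g (X t \<omega>) \<partial>W) = (\<integral>\<^sup>+\<omega>. indicator B \<omega> * (\<integral>\<^sup>+y. g y \<partial>p (t - s) (X s \<omega>)) \<partial>W)"
    and fin: "(\<integral>\<^sup>+\<omega>. ennreal (\<rho> (X t \<omega>)) \<partial>W) < \<infinity>"
    and f: "f \<in> borel_measurable borel" and b: "\<forall>y. \<bar>f y\<bar> \<le> c * \<rho> y"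
  shows "integrable W (\<lambda>\<omega>. f (X t \<omega>))"
    "AE \<omega> in W. real_cond_exp W F (\<lambda>\<omega>. f (X t \<omega>)) \<omega> = Qt (t - s) f (X s \<omega>)"
proof -
  interpret sigma_finite_subalgebra W F by (rule sfs)
  have spF: "space F = space M" using subalg sW by (metis sets_eq_imp_space_eq subalgebra_def)
  have FM: "B \<in> sets F \<Longrightarrow> B \<in> sets M" for B using subalg sW by (auto simp: subalgebra_def)
  have topF: "space M \<in> sets F" using sets.top[of F] spF by simp
  have R1: "integrable W (\<lambda>\<omega>. indicator (space M) \<omega> * f (X t \<omega>))"
    by (rule real_markov(1)[OF sW st FM[OF topF] _ fin f b], rule nnm[OF topF], assumption)
  have R2: "integrable W (\<lambda>\<omega>. indicator (space M) \<omega> * Qt (t - s) f (X s \<omega>))"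
    by (rule real_markov(2)[OF sW st FM[OF topF] _ fin f b], rule nnm[OF topF], assumption)
  have spW: "space W = space M" using sW sets_eq_imp_space_eq by blast
  have i1: "integrable W (\<lambda>\<omega>. f (X t \<omega>))"
  proof -
    have "integrable W (\<lambda>\<omega>. f (X t \<omega>)) \<longleftrightarrow> integrable W (\<lambda>\<omega>. indicator (space M) \<omega> * f (X t \<omega>))"
      by (rule Bochner_Integration.integrable_cong) (auto simp: spW)
    then show ?thesis using R1 by simp
  qed
  have i2: "integrable W (\<lambda>\<omega>. Qt (t - s) f (X s \<omega>))"
  proof -
    have "integrable W (\<lambda>\<omega>. Qt (t - s) f (X s \<omega>)) \<longleftrightarrow> integrable W (\<lambda>\<omega>. indicator (space M) \<omega> * Qt (t - s) f (X s \<omega>))"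
      by (rule Bochner_Integration.integrable_cong) (auto simp: spW)
    then show ?thesis using R2 by simp
  qed
  have kF: "(\<lambda>\<omega>. Qt (t - s) f (X s \<omega>)) \<in> borel_measurable F"
    using Qt_meas[of "t - s" f] st f XF by (metis diff_ge_0_iff_ge measurable_compose)
  show "integrable W (\<lambda>\<omega>. f (X t \<omega>))" by (rule i1)
  show "AE \<omega> in W. real_cond_exp W F (\<lambda>\<omega>. f (X t \<omega>)) \<omega> = Qt (t - s) f (X s \<omega>)"
  proof (rule ce_charact[OF sfs i1 i2 kF])
    fix B assume B: "B \<in> sets F"
    show "(\<integral>\<omega>. indicator B \<omega> * f (X t \<omega>) \<partial>W) = (\<integral>\<omega>. indicator B \<omega> * Qt (t - s) f (X s \<omega>) \<partial>W)"
      by (rule real_markov(3)[OF sW st FM[OF B] _ fin f b], rule nnm[OF B], assumption)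
  qed
qed




lemma Brho_int: "0 \<le> t \<Longrightarrow> f \<in> B_rho \<rho> \<Longrightarrow> integrable (p t x) f"
  using dom_integrable B_rho_meas B_rho_bound by blast

lemma C0_meas: "h \<in> C0 \<Longrightarrow> h \<in> borel_measurable borel"
  by (auto simp: C0_def intro: borel_measurable_continuous_onI)

lemma C0_rho: fixes h :: "'a \<Rightarrow> real" assumes "h \<in> C0" shows "\<exists>c. \<forall>x. \<bar>h x\<bar> \<le> c * \<rho> x"
  using C0_bounded[OF assms] bounded_rho by blast

lemma Qt_C0: "0 \<le> t \<Longrightarrow> h \<in> C0 \<Longrightarrow> Qt t h \<in> C0"
  using ft unfolding feller_transition_def Qt_def[abs_def] by blast

lemma Qt_Brho: assumes t: "0 \<le> t" and f: "f \<in> B_rho \<rho>" shows "Qt t f \<in> B_rho \<rho>"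
proof (rule B_rho_I)
  have fm: "f \<in> borel_measurable borel" by (rule B_rho_meas[OF f])
  have fb: "\<forall>y. \<bar>f y\<bar> \<le> rho_norm \<rho> f * \<rho> y" using B_rho_bound[OF f] by blast
  show "\<forall>x. \<bar>Qt t f x\<bar> \<le> (rho_norm \<rho> f * Kt t) * \<rho> x" using Qt_bound[OF t fm fb] by simp
  fix e :: real assume e: "0 < e"
  define d where "d = e / Kt t"
  have d: "0 < d" using e Kt_pos[of t] by (simp add: d_def)
  obtain h where h: "h \<in> C0" "\<forall>x. \<bar>f x - h x\<bar> \<le> d * \<rho> x" using C0_dense[OF f d] by blast
  obtain ch where ch: "\<forall>x. \<bar>h x\<bar> \<le> ch * \<rho> x" using C0_rho[OF h(1)] by blast
  have hm: "h \<in> borel_measurable borel" by (rule C0_meas[OF h(1)])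
  have "\<bar>Qt t f x - Qt t h x\<bar> \<le> e * \<rho> x" for x
  proof -
    have "Qt t f x - Qt t h x = Qt t (\<lambda>y. f y - h y) x" by (rule Qt_diff[OF t fm hm fb ch, symmetric])
    moreover have "\<bar>Qt t (\<lambda>y. f y - h y) x\<bar> \<le> d * Kt t * \<rho> x"
      by (rule Qt_bound[OF t]) (use fm hm h(2) in auto)
    moreover have "d * Kt t = e" using Kt_pos[of t] by (simp add: d_def)
    ultimately show ?thesis by simp
  qed
  moreover have "Qt t h \<in> Cb" using Qt_C0[OF t h(1)] by (rule C0_Cb)
  ultimately show "\<exists>g\<in>Cb. \<forall>x. \<bar>Qt t f x - g x\<bar> \<le> e * \<rho> x" by blast
qed

lemma Qt_norm: assumes t: "0 \<le> t" and f: "f \<in> B_rho \<rho>" shows "rho_norm \<rho> (Qt t f) \<le> Kt t * rho_norm \<rho> f"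
proof -
  have fm: "f \<in> borel_measurable borel" by (rule B_rho_meas[OF f])
  have fb: "\<forall>y. \<bar>f y\<bar> \<le> rho_norm \<rho> f * \<rho> y" using B_rho_bound[OF f] by blast
  have "\<forall>x. \<bar>Qt t f x\<bar> \<le> (Kt t * rho_norm \<rho> f) * \<rho> x" using Qt_bound[OF t fm fb] by (simp add: mult.commute)
  then show ?thesis by (rule rn_least(2))
qed

lemma Qt_norm_t0: assumes t: "t \<in> {0..t0}" and f: "f \<in> B_rho \<rho>" shows "rho_norm \<rho> (Qt t f) \<le> C * rho_norm \<rho> f"
proof -
  have fm: "f \<in> borel_measurable borel" by (rule B_rho_meas[OF f])
  have fb: "\<forall>y. \<bar>f y\<bar> \<le> rho_norm \<rho> f * \<rho> y" using B_rho_bound[OF f] by blast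
  have "\<forall>x. \<bar>Qt t f x\<bar> \<le> (C * rho_norm \<rho> f) * \<rho> x" using Qt_bound_t0[OF t fm fb] by (simp add: mult.commute)
  then show ?thesis by (rule rn_least(2))
qed

lemma Qt_0: assumes f: "f \<in> B_rho \<rho>" shows "Qt 0 f = f"
proof
  fix x show "Qt 0 f x = f x" unfolding Qt_def p0 using B_rho_meas[OF f] by (simp add: integral_return)
qed

lemma Qt_pos: "(\<forall>x. 0 \<le> f x) \<Longrightarrow> 0 \<le> Qt t f x"
  unfolding Qt_def by (simp add: integral_nonneg_AE)

lemma Qt_lin: assumes t: "0 \<le> t" and f: "f \<in> B_rho \<rho>" and g: "g \<in> B_rho \<rho>"
  shows "Qt t (\<lambda>x. a * f x + b * g x) = (\<lambda>x. a * Qt t f x + b * Qt t g x)"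
proof
  fix x
  have i: "integrable (p t x) f" "integrable (p t x) g" using Brho_int[OF t f] Brho_int[OF t g] by auto
  show "Qt t (\<lambda>x. a * f x + b * g x) x = a * Qt t f x + b * Qt t g x"
    unfolding Qt_def using i by simp
qed




lemma real_markov_P:
  fixes f :: "'a \<Rightarrow> real"
  assumes st: "0 \<le> s" "s \<le> t" and B: "B \<in> sets (nat_filtration M X s)"
    and f: "f \<in> borel_measurable borel" and b: "\<forall>y. \<bar>f y\<bar> \<le> c * \<rho> y"
  shows "(\<integral>\<omega>. indicator B \<omega> * f (X t \<omega>) \<partial>P x) = (\<integral>\<omega>. indicator B \<omega> * Qt (t - s) f (X s \<omega>) \<partial>P x)"
    "integrable (P x) (\<lambda>\<omega>. indicator B \<omega> * f (X t \<omega>))"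
proof -
  have t: "0 \<le> t" using st by simp
  show "(\<integral>\<omega>. indicator B \<omega> * f (X t \<omega>) \<partial>P x) = (\<integral>\<omega>. indicator B \<omega> * Qt (t - s) f (X s \<omega>) \<partial>P x)"
    by (rule real_markov(3)[OF sets_P st B_in_M[OF B] _ fin_P[OF t] f b], rule markov_nn[OF st B], assumption)
  show "integrable (P x) (\<lambda>\<omega>. indicator B \<omega> * f (X t \<omega>))"
    by (rule real_markov(1)[OF sets_P st B_in_M[OF B] _ fin_P[OF t] f b], rule markov_nn[OF st B], assumption)
qed

lemma ind_space: fixes h :: "'w \<Rightarrow> real" shows "(\<integral>\<omega>. indicator (space M) \<omega> * h \<omega> \<partial>P x) = (\<integral>\<omega>. h \<omega> \<partial>P x)"
  by (rule Bochner_Integration.integral_cong) (auto simp: space_P)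

lemma law_real:
  fixes h :: "'a \<Rightarrow> real"
  assumes u: "0 \<le> u" and h: "h \<in> borel_measurable borel" and b: "\<forall>y. \<bar>h y\<bar> \<le> c * \<rho> y"
  shows "(\<integral>\<omega>. h (X u \<omega>) \<partial>P x) = Qt u h x"
proof -
  interpret prob_space "P x" by (rule P_prob)
  have [measurable]: "Qt u h \<in> borel_measurable borel" by (rule Qt_meas[OF u h])
  have [measurable]: "X 0 \<in> M \<rightarrow>\<^sub>M borel" by (rule X_meas) simp
  have "(\<integral>\<omega>. h (X u \<omega>) \<partial>P x) = (\<integral>\<omega>. indicator (space M) \<omega> * h (X u \<omega>) \<partial>P x)" by (rule ind_space[symmetric])
  also have "\<dots> = (\<integral>\<omega>. indicator (space M) \<omega> * Qt (u - 0) h (X 0 \<omega>) \<partial>P x)"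
    by (rule real_markov_P(1)[OF order_refl u space_in_nf h b])
  also have "\<dots> = (\<integral>\<omega>. Qt u h x \<partial>P x)"
    by (rule integral_cong_AE) (use X0[of x] in \<open>auto simp: space_P\<close>)
  also have "\<dots> = Qt u h x" by (simp add: prob_space)
  finally show ?thesis .
qed

lemma Qt_semigroup: assumes s: "0 \<le> s" and t: "0 \<le> t" and f: "f \<in> B_rho \<rho>"
  shows "Qt (t + s) f = Qt s (Qt t f)"
proof
  fix x
  have fm: "f \<in> borel_measurable borel" by (rule B_rho_meas[OF f])
  have fb: "\<forall>y. \<bar>f y\<bar> \<le> rho_norm \<rho> f * \<rho> y" using B_rho_bound[OF f] by blast
  have qm: "Qt t f \<in> borel_measurable borel" by (rule Qt_meas[OF t fm])
  have qb: "\<forall>y. \<bar>Qt t f y\<bar> \<le> (rho_norm \<rho> f * Kt t) * \<rho> y" using Qt_bound[OF t fm fb] by simp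
  have st: "0 \<le> s" "s \<le> t + s" using s t by auto
  have "Qt (t + s) f x = (\<integral>\<omega>. f (X (t + s) \<omega>) \<partial>P x)" using s t by (intro law_real[symmetric, OF _ fm fb]) auto
  also have "\<dots> = (\<integral>\<omega>. indicator (space M) \<omega> * f (X (t + s) \<omega>) \<partial>P x)" by (rule ind_space[symmetric])
  also have "\<dots> = (\<integral>\<omega>. indicator (space M) \<omega> * Qt (t + s - s) f (X s \<omega>) \<partial>P x)"
    by (rule real_markov_P(1)[OF st space_in_nf fm fb])
  also have "\<dots> = (\<integral>\<omega>. Qt t f (X s \<omega>) \<partial>P x)" by (simp add: ind_space)
  also have "\<dots> = Qt s (Qt t f) x" by (rule law_real[OF s qm qb])
  finally show "Qt (t + s) f x = Qt s (Qt t f) x" .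
qed




lemma feller_sc: "h \<in> C0 \<Longrightarrow> ((\<lambda>t. SUP y. \<bar>Qt t h y - h y\<bar>) \<longlongrightarrow> 0) (at_right 0)"
  using ft unfolding feller_transition_def Qt_def by blast

lemma C0_diff_le: assumes t: "0 \<le> t" and h: "h \<in> C0"
  shows "\<bar>Qt t h y - h y\<bar> \<le> (SUP y. \<bar>Qt t h y - h y\<bar>)"
proof -
  obtain B1 where B1: "\<forall>y. \<bar>Qt t h y\<bar> \<le> B1" using C0_bounded[OF Qt_C0[OF t h]] by blast
  obtain B2 where B2: "\<forall>y. \<bar>h y\<bar> \<le> B2" using C0_bounded[OF h] by blast
  have "bdd_above (range (\<lambda>y. \<bar>Qt t h y - h y\<bar>))"
  proof (rule bdd_aboveI2[where M="B1 + B2"])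
    fix y show "\<bar>Qt t h y - h y\<bar> \<le> B1 + B2" using B1[rule_format, of y] B2[rule_format, of y] by linarith
  qed
  then show ?thesis by (intro cSUP_upper) auto
qed

lemma Qt_cont: assumes f: "f \<in> B_rho \<rho>" shows "((\<lambda>t. Qt t f x) \<longlongrightarrow> f x) (at_right 0)"
  unfolding tendsto_iff
proof (intro allI impI)
  fix e :: real assume e: "0 < e"
  have fm: "f \<in> borel_measurable borel" by (rule B_rho_meas[OF f])
  have fb: "\<forall>y. \<bar>f y\<bar> \<le> rho_norm \<rho> f * \<rho> y" using B_rho_bound[OF f] by blast
  define K where "K = (C + 1) * \<rho> x"
  have K: "0 < K" using Cpos rho_pos[of x] by (simp add: K_def)
  define d where "d = e / (3 * K)"
  have d: "0 < d" using e K by (simp add: d_def)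
  have dd: "d * C * \<rho> x + d * \<rho> x = e / 3"
  proof -
    have "d * C * \<rho> x + d * \<rho> x = d * K" by (simp add: K_def algebra_simps)
    also have "\<dots> = e / 3" using K by (simp add: d_def)
    finally show ?thesis .
  qed
  obtain h where h: "h \<in> C0" "\<forall>y. \<bar>f y - h y\<bar> \<le> d * \<rho> y" using C0_dense[OF f d] by blast
  obtain ch where ch: "\<forall>y. \<bar>h y\<bar> \<le> ch * \<rho> y" using C0_rho[OF h(1)] by blast
  have hm: "h \<in> borel_measurable borel" by (rule C0_meas[OF h(1)])
  have ev1: "eventually (\<lambda>t. (SUP y. \<bar>Qt t h y - h y\<bar>) < e / 3) (at_right 0)"
    using order_tendstoD(2)[OF feller_sc[OF h(1)], of "e / 3"] e by simp
  have ev2: "eventually (\<lambda>t. 0 < t \<and> t \<le> t0) (at_right (0::real))"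
    unfolding eventually_at_right[OF t0] by (intro exI[of _ t0]) (auto simp: t0)
  show "eventually (\<lambda>t. dist (Qt t f x) (f x) < e) (at_right 0)"
    using ev1 ev2
  proof (rule eventually_elim2)
    fix t assume sup: "(SUP y. \<bar>Qt t h y - h y\<bar>) < e / 3" and tt: "0 < t \<and> t \<le> t0"
    then have t: "0 \<le> t" "t \<in> {0..t0}" by auto
    have "Qt t f x - Qt t h x = Qt t (\<lambda>y. f y - h y) x" by (rule Qt_diff[OF t(1) fm hm fb ch, symmetric])
    moreover have "\<bar>Qt t (\<lambda>y. f y - h y) x\<bar> \<le> d * C * \<rho> x"
      by (rule Qt_bound_t0[OF t(2)]) (use fm hm h(2) in auto)
    ultimately have a1: "\<bar>Qt t f x - Qt t h x\<bar> \<le> d * C * \<rho> x" by simp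
    have a2: "\<bar>Qt t h x - h x\<bar> < e / 3" using C0_diff_le[OF t(1) h(1), of x] sup by linarith
    have a3: "\<bar>h x - f x\<bar> \<le> d * \<rho> x" using h(2) by (simp add: abs_minus_commute)
    have "\<bar>Qt t f x - f x\<bar> < e / 3 + e / 3" using a1 a2 a3 dd by linarith
    then show "dist (Qt t f x) (f x) < e" using e by (simp add: dist_real_def)
  qed
qed




lemma gfs: "gen_feller_semigroup \<rho> Qt"
  unfolding gen_feller_semigroup_def
proof (intro conjI)
  show "\<forall>t\<ge>0. \<forall>f\<in>B_rho \<rho>. Qt t f \<in> B_rho \<rho>" using Qt_Brho by blast
  show "\<forall>t\<ge>0. \<forall>f\<in>B_rho \<rho>. \<forall>g\<in>B_rho \<rho>. \<forall>a b. Qt t (\<lambda>x. a * f x + b * g x) = (\<lambda>x. a * Qt t f x + b * Qt t g x)"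
    using Qt_lin by blast
  show "\<forall>t\<ge>0. \<exists>K. \<forall>f\<in>B_rho \<rho>. rho_norm \<rho> (Qt t f) \<le> K * rho_norm \<rho> f" using Qt_norm by blast
  show "\<forall>f\<in>B_rho \<rho>. Qt 0 f = f" using Qt_0 by blast
  show "\<forall>s\<ge>0. \<forall>t\<ge>0. \<forall>f\<in>B_rho \<rho>. Qt (t + s) f = Qt s (Qt t f)" using Qt_semigroup by blast
  show "\<forall>f\<in>B_rho \<rho>. \<forall>x. ((\<lambda>t. Qt t f x) \<longlongrightarrow> f x) (at_right 0)" using Qt_cont by blast
  show "\<exists>e>0. \<exists>C. \<forall>t\<in>{0..e}. \<forall>f\<in>B_rho \<rho>. rho_norm \<rho> (Qt t f) \<le> C * rho_norm \<rho> f"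
    using t0 Qt_norm_t0 by (intro exI[of _ t0] conjI exI[of _ C]) auto
  show "\<forall>t\<ge>0. \<forall>f\<in>B_rho \<rho>. (\<forall>x. 0 \<le> f x) \<longrightarrow> (\<forall>x. 0 \<le> Qt t f x)" using Qt_pos by blast
qed

lemma Qt_eq: "(\<lambda>t f x. \<integral>y. f y \<partial>p t x) = Qt"
  by (intro ext) (simp add: Qt_def)

lemma part_nu: assumes st: "0 \<le> s" "s \<le> t" and f: "f \<in> B_rho \<rho>"
  shows "integrable (\<nu> \<bind> P) (\<lambda>\<omega>. f (X t \<omega>)) \<and>
    (AE \<omega> in \<nu> \<bind> P. real_cond_exp (\<nu> \<bind> P) (nat_filtration M X s) (\<lambda>\<omega>'. f (X t \<omega>')) \<omega> = (\<integral>y. f y \<partial>p (t - s) (X s \<omega>)))"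
proof -
  have t: "0 \<le> t" using st by simp
  have fb: "\<forall>y. \<bar>f y\<bar> \<le> rho_norm \<rho> f * \<rho> y" using B_rho_bound[OF f] by blast
  have G1: "integrable (\<nu> \<bind> P) (\<lambda>\<omega>. f (X t \<omega>))"
    by (rule ce_gen(1)[OF sfs_nf_nu sets_nuP st X_meas_nf[OF st(1) order_refl] _ fin_nu[OF t] B_rho_meas[OF f] fb],
        rule markov_nn_nu[OF st], assumption+)
  have G2: "AE \<omega> in \<nu> \<bind> P. real_cond_exp (\<nu> \<bind> P) (nat_filtration M X s) (\<lambda>\<omega>. f (X t \<omega>)) \<omega> = Qt (t - s) f (X s \<omega>)"
    by (rule ce_gen(2)[OF sfs_nf_nu sets_nuP st X_meas_nf[OF st(1) order_refl] _ fin_nu[OF t] B_rho_meas[OF f] fb],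
        rule markov_nn_nu[OF st], assumption+)
  show ?thesis using G1 G2 unfolding Qt_def by blast
qed




lemma abs_int_le: fixes a b :: "'b \<Rightarrow> real"
  assumes "integrable W a" "integrable W b" "\<And>\<omega>. \<omega> \<in> space W \<Longrightarrow> \<bar>a \<omega>\<bar> \<le> b \<omega>"
  shows "\<bar>\<integral>\<omega>. a \<omega> \<partial>W\<bar> \<le> (\<integral>\<omega>. b \<omega> \<partial>W)"
proof -
  have "norm (\<integral>\<omega>. a \<omega> \<partial>W) \<le> (\<integral>\<omega>. norm (a \<omega>) \<partial>W)" by (rule integral_norm_bound)
  also have "\<dots> \<le> (\<integral>\<omega>. b \<omega> \<partial>W)" by (rule integral_mono) (use assms in auto)
  finally show ?thesis by simp
qed

lemma int_rhoX: assumes u: "0 \<le> u" shows "integrable (P x) (\<lambda>\<omega>. \<rho> (X u \<omega>))"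
proof (rule integrableI_nonneg)
  show "(\<lambda>\<omega>. \<rho> (X u \<omega>)) \<in> borel_measurable (P x)"
    using measurable_compose[OF X_meas[OF u] rho_meas] by (simp add: measurable_cong_sets[OF sets_P refl])
  show "AE \<omega> in P x. 0 \<le> \<rho> (X u \<omega>)" by (simp add: less_imp_le[OF rho_pos])
  show "(\<integral>\<^sup>+\<omega>. ennreal (\<rho> (X u \<omega>)) \<partial>P x) < \<infinity>" by (rule fin_P[OF u])
qed

lemma int_gX: fixes g :: "'a \<Rightarrow> real"
  assumes u: "0 \<le> u" and g: "g \<in> borel_measurable borel" and b: "\<forall>y. \<bar>g y\<bar> \<le> c * \<rho> y"
  shows "integrable (P x) (\<lambda>\<omega>. g (X u \<omega>))"
proof (rule Bochner_Integration.integrable_bound[of _ "\<lambda>\<omega>. c * \<rho> (X u \<omega>)"])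
  show "integrable (P x) (\<lambda>\<omega>. c * \<rho> (X u \<omega>))" using int_rhoX[OF u] by simp
  show "(\<lambda>\<omega>. g (X u \<omega>)) \<in> borel_measurable (P x)"
    using measurable_compose[OF X_meas[OF u] g] by (simp add: measurable_cong_sets[OF sets_P refl])
  show "AE \<omega> in P x. norm (g (X u \<omega>)) \<le> norm (c * \<rho> (X u \<omega>))" using b by (auto intro: order_trans abs_ge_self)
qed

lemma int_QX: fixes g :: "'a \<Rightarrow> real"
  assumes u: "0 \<le> u" and r: "0 \<le> r" and g: "g \<in> borel_measurable borel" and b: "\<forall>y. \<bar>g y\<bar> \<le> c * \<rho> y"
  shows "integrable (P x) (\<lambda>\<omega>. Qt r g (X u \<omega>))"
  by (rule int_gX[OF u Qt_meas[OF r g]]) (use Qt_bound[OF r g b] in blast)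

lemma Qt_sup_bound: fixes g :: "'a \<Rightarrow> real"
  assumes a: "0 \<le> a" and g: "g \<in> borel_measurable borel" and b: "\<forall>z. \<bar>g z\<bar> \<le> B"
  shows "\<bar>Qt a g y\<bar> \<le> B"
proof -
  interpret prob_space "p a y" by (rule p_prob[OF a])
  have gm: "g \<in> borel_measurable (p a y)" using g by (simp add: measurable_cong_sets[OF sets_p[OF a] refl])
  have "\<bar>\<integral>z. g z \<partial>p a y\<bar> \<le> (\<integral>z. B \<partial>p a y)"
    by (rule abs_int_le) (use b gm in \<open>auto intro: integrable_const_bound[where B=B]\<close>)
  then show ?thesis by (simp add: Qt_def prob_space)
qed

lemma C0_Brho: "h \<in> C0 \<Longrightarrow> h \<in> B_rho \<rho>" using C0_Cb Cb_Brho by blast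




definition "Grc s = (\<Inter>u\<in>{s<..}. sets (nat_filtration M X u))"

lemma Grc_sub: "Grc s \<subseteq> sets (nat_filtration M X u)" if "s < u"
  using that unfolding Grc_def by blast

lemma Grc_pow: "Grc s \<subseteq> Pow (space M)"
proof -
  have "Grc s \<subseteq> sets (nat_filtration M X (s + 1))" by (rule Grc_sub) simp
  also have "\<dots> \<subseteq> sets M" by (rule sets_nf_sub)
  also have "\<dots> \<subseteq> Pow (space M)" using sets.space_closed[of M] by auto
  finally show ?thesis .
qed

lemma space_rc[simp]: "space (rc_filtration M X s) = space M"
  unfolding rc_filtration_def Grc_def[symmetric] by (rule space_measure_of[OF Grc_pow])

lemma sets_rc: "sets (rc_filtration M X s) = sigma_sets (space M) (Grc s)"
  unfolding rc_filtration_def Grc_def[symmetric] by (rule sets_measure_of[OF Grc_pow])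

lemma sets_rc_nf: assumes "s < u" shows "sets (rc_filtration M X s) \<subseteq> sets (nat_filtration M X u)"
proof -
  have "sigma_sets (space (nat_filtration M X u)) (Grc s) \<subseteq> sets (nat_filtration M X u)"
    by (rule sets.sigma_sets_subset[OF Grc_sub[OF assms]])
  then show ?thesis by (simp add: sets_rc)
qed

lemma sets_nf_rc: assumes "0 \<le> s" shows "sets (nat_filtration M X s) \<subseteq> sets (rc_filtration M X s)"
proof -
  have "sets (nat_filtration M X s) \<subseteq> Grc s" unfolding Grc_def using sets_nf_mono by (auto intro: less_imp_le)
  also have "\<dots> \<subseteq> sigma_sets (space M) (Grc s)" by (rule sigma_sets_superset_generator)
  finally show ?thesis by (simp add: sets_rc)
qed

lemma sets_rc_M: "sets (rc_filtration M X s) \<subseteq> sets M"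
  using sets_rc_nf[of s "s + 1"] sets_nf_sub by auto

lemma subalg_rc: "subalgebra (P x) (rc_filtration M X s)"
  unfolding subalgebra_def using sets_rc_M space_P sets_P by auto

lemma sfs_rc: "sigma_finite_subalgebra (P x) (rc_filtration M X s)"
proof -
  interpret prob_space "P x" by (rule P_prob)
  have "finite_measure_subalgebra (P x) (rc_filtration M X s)"
    by unfold_locales (rule subalg_rc)
  then show ?thesis by (rule finite_measure_subalgebra_is_sigma_finite)
qed

lemma X_meas_rc: assumes "0 \<le> s" shows "X s \<in> rc_filtration M X s \<rightarrow>\<^sub>M borel"
proof (rule measurable_from_subalg[OF _ X_meas_nf[OF assms order_refl]])
  show "subalgebra (rc_filtration M X s) (nat_filtration M X s)"
    unfolding subalgebra_def using sets_nf_rc[OF assms] by simp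
qed




lemma conv_pt:
  fixes e :: "nat \<Rightarrow> real" and yn :: "nat \<Rightarrow> 'a"
  assumes r: "0 < r" and e: "\<And>n. 0 < e n \<and> e n < r" and el: "e \<longlonglongrightarrow> 0" and h: "h \<in> C0" and yl: "yn \<longlonglongrightarrow> y"
  shows "(\<lambda>n. Qt (r - e n) h (yn n)) \<longlonglongrightarrow> Qt r h y"
proof -
  define S where "S n = (SUP z. \<bar>Qt (e n) h z - h z\<bar>)" for n
  have ef: "filterlim e (at_right 0) sequentially"
    by (rule tendsto_imp_filterlim_at_right[OF el]) (use e in auto)
  have Sl: "S \<longlonglongrightarrow> 0" unfolding S_def by (rule filterlim_compose[OF feller_sc[OF h] ef])
  have hm: "h \<in> borel_measurable borel" by (rule C0_meas[OF h])
  obtain ch where ch: "\<forall>z. \<bar>h z\<bar> \<le> ch * \<rho> z" using C0_rho[OF h] by blast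
  have bnd: "\<bar>Qt (r - e n) h y' - Qt r h y'\<bar> \<le> S n" for n y'
  proof -
    have en: "0 \<le> e n" "0 \<le> r - e n" using e[of n] by auto
    have q: "Qt (e n) h \<in> C0" by (rule Qt_C0[OF en(1) h])
    have qm: "Qt (e n) h \<in> borel_measurable borel" by (rule C0_meas[OF q])
    obtain cq where cq: "\<forall>z. \<bar>Qt (e n) h z\<bar> \<le> cq * \<rho> z" using C0_rho[OF q] by blast
    have "Qt r h = Qt (r - e n) (Qt (e n) h)"
      using Qt_semigroup[OF en(2) en(1) C0_Brho[OF h]] by simp
    then have "Qt r h y' - Qt (r - e n) h y' = Qt (r - e n) (\<lambda>z. Qt (e n) h z - h z) y'"
      using Qt_diff[OF en(2) qm hm cq ch, of y'] by simp
    moreover have "\<bar>Qt (r - e n) (\<lambda>z. Qt (e n) h z - h z) y'\<bar> \<le> S n"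
      by (rule Qt_sup_bound[OF en(2)]) (use qm hm C0_diff_le[OF en(1) h] in \<open>auto simp: S_def\<close>)
    ultimately show ?thesis by (simp add: abs_minus_commute)
  qed
  have l1: "(\<lambda>n. Qt (r - e n) h (yn n) - Qt r h (yn n)) \<longlonglongrightarrow> 0"
    by (rule Lim_null_comparison[OF always_eventually Sl]) (use bnd in simp)
  have cq: "continuous_on UNIV (Qt r h)" using Qt_C0[OF _ h] r by (simp add: C0_def)
  have l2: "(\<lambda>n. Qt r h (yn n)) \<longlonglongrightarrow> Qt r h y"
    by (rule continuous_on_tendsto_compose[OF cq yl]) auto
  have "(\<lambda>n. (Qt (r - e n) h (yn n) - Qt r h (yn n)) + Qt r h (yn n)) \<longlonglongrightarrow> 0 + Qt r h y"
    by (rule tendsto_add[OF l1 l2])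
  then show ?thesis by simp
qed




lemma cadlag: "\<omega> \<in> space M \<Longrightarrow> 0 \<le> s \<Longrightarrow> ((\<lambda>u. X u \<omega>) \<longlongrightarrow> X s \<omega>) (at_right s)"
  using fp by (auto simp: feller_process_def cadlag_paths_def)

lemma rc_C0:
  assumes s: "0 \<le> s" and st: "s < t" and h: "h \<in> C0" and B: "B \<in> sets (rc_filtration M X s)"
  shows "(\<integral>\<omega>. indicator B \<omega> * h (X t \<omega>) \<partial>P x) = (\<integral>\<omega>. indicator B \<omega> * Qt (t - s) h (X s \<omega>) \<partial>P x)"
proof -
  interpret prob_space "P x" by (rule P_prob)
  define r where "r = t - s"
  have r: "0 < r" using st by (simp add: r_def)
  define e where "e n = r / real (Suc (Suc n))" for n
  have e: "0 < e n \<and> e n < r" for n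
  proof
    show "0 < e n" using r by (simp add: e_def)
    have "r / real (Suc (Suc n)) < r / 1" using r by (intro divide_strict_left_mono) auto
    then show "e n < r" by (simp add: e_def)
  qed
  have el: "e \<longlonglongrightarrow> 0"
    unfolding e_def by (rule LIMSEQ_Suc[OF LIMSEQ_Suc[OF lim_const_over_n]])
  define u where "u n = s + e n" for n
  have u: "0 \<le> u n" "u n \<le> t" "s < u n" "t - u n = r - e n" for n using e[of n] s by (auto simp: u_def r_def)
  have ul: "u \<longlonglongrightarrow> s" unfolding u_def using tendsto_add[OF tendsto_const el, of s] by simp
  have uf: "filterlim u (at_right s) sequentially"
    by (rule tendsto_imp_filterlim_at_right[OF ul]) (use u in auto)
  have hm[measurable]: "h \<in> borel_measurable borel" by (rule C0_meas[OF h])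
  obtain ch where ch: "\<forall>z. \<bar>h z\<bar> \<le> ch * \<rho> z" using C0_rho[OF h] by blast
  obtain Bh where Bh: "\<forall>z. \<bar>h z\<bar> \<le> Bh" using C0_bounded[OF h] by blast
  have BM: "B \<in> sets M" using B sets_rc_M by blast
  have Bn: "B \<in> sets (nat_filtration M X (u n))" for n using sets_rc_nf[OF u(3)[of n]] B by blast
  have eqn: "(\<integral>\<omega>. indicator B \<omega> * h (X t \<omega>) \<partial>P x) = (\<integral>\<omega>. indicator B \<omega> * Qt (r - e n) h (X (u n) \<omega>) \<partial>P x)" for n
    using real_markov_P(1)[OF u(1)[of n] u(2)[of n] Bn[of n] hm ch, of x] u(4)[of n] by simp
  have lim: "(\<lambda>n. \<integral>\<omega>. indicator B \<omega> * Qt (r - e n) h (X (u n) \<omega>) \<partial>P x) \<longlonglongrightarrow> (\<integral>\<omega>. indicator B \<omega> * Qt r h (X s \<omega>) \<partial>P x)"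
  proof (rule integral_dominated_convergence[where w="\<lambda>_. Bh"])
    have [measurable]: "B \<in> sets (P x)" using BM by (simp add: sets_P)
    have [measurable]: "Qt r h \<in> borel_measurable borel" using r by (intro Qt_meas hm) auto
    have [measurable]: "X s \<in> P x \<rightarrow>\<^sub>M borel" using X_meas[OF s] by (simp add: measurable_cong_sets[OF sets_P refl])
    show "(\<lambda>\<omega>. indicator B \<omega> * Qt r h (X s \<omega>)) \<in> borel_measurable (P x)" by measurable
    fix n
    have [measurable]: "Qt (r - e n) h \<in> borel_measurable borel" using e[of n] by (intro Qt_meas hm) auto
    have [measurable]: "X (u n) \<in> P x \<rightarrow>\<^sub>M borel" using X_meas[OF u(1)[of n]] by (simp add: measurable_cong_sets[OF sets_P refl])
    show "(\<lambda>\<omega>. indicator B \<omega> * Qt (r - e n) h (X (u n) \<omega>)) \<in> borel_measurable (P x)" by measurable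
    show "AE \<omega> in P x. norm (indicator B \<omega> * Qt (r - e n) h (X (u n) \<omega>)) \<le> Bh"
    proof (rule AE_I2)
      fix \<omega>
      have "\<bar>Qt (r - e n) h (X (u n) \<omega>)\<bar> \<le> Bh" using e[of n] by (intro Qt_sup_bound[OF _ hm Bh]) auto
      moreover have "0 \<le> Bh" using Bh abs_ge_zero order_trans by blast
      ultimately show "norm (indicator B \<omega> * Qt (r - e n) h (X (u n) \<omega>)) \<le> Bh" by (auto simp: indicator_def)
    qed
  next
    show "integrable (P x) (\<lambda>_. Bh)" by simp
    show "AE \<omega> in P x. (\<lambda>n. indicator B \<omega> * Qt (r - e n) h (X (u n) \<omega>)) \<longlonglongrightarrow> indicator B \<omega> * Qt r h (X s \<omega>)"
    proof (rule AE_I2)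
      fix \<omega> assume "\<omega> \<in> space (P x)"
      then have \<omega>: "\<omega> \<in> space M" by (simp add: space_P)
      have yl: "(\<lambda>n. X (u n) \<omega>) \<longlonglongrightarrow> X s \<omega>" by (rule filterlim_compose[OF cadlag[OF \<omega> s] uf])
      show "(\<lambda>n. indicator B \<omega> * Qt (r - e n) h (X (u n) \<omega>)) \<longlonglongrightarrow> indicator B \<omega> * Qt r h (X s \<omega>)"
        by (rule tendsto_mult[OF tendsto_const conv_pt[OF r e el h yl]])
    qed
  qed
  have "(\<lambda>n. \<integral>\<omega>. indicator B \<omega> * h (X t \<omega>) \<partial>P x) \<longlonglongrightarrow> (\<integral>\<omega>. indicator B \<omega> * Qt r h (X s \<omega>) \<partial>P x)"
    using lim by (simp only: eqn[symmetric])
  then show ?thesis by (simp add: LIMSEQ_const_iff r_def)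
qed




lemma int_ind: fixes g :: "'w \<Rightarrow> real" assumes "B \<in> sets M" "integrable (P x) g"
  shows "integrable (P x) (\<lambda>\<omega>. indicator B \<omega> * g \<omega>)"
  using integrable_mult_indicator[of B "P x" g] assms by (simp add: sets_P)

lemma eps_zero: fixes a K :: real assumes K: "0 \<le> K" and le: "\<And>d. 0 < d \<Longrightarrow> \<bar>a\<bar> \<le> d * K" shows "a = 0"
proof -
  have "\<bar>a\<bar> \<le> 0 + e" if e: "0 < e" for e
  proof -
    have "\<bar>a\<bar> \<le> (e / (K + 1)) * K" using le[of "e / (K + 1)"] e K by simp
    also have "\<dots> \<le> e" using e K by (simp add: field_simps)
    finally show ?thesis by simp
  qed
  then have "\<bar>a\<bar> \<le> 0" by (rule field_le_epsilon)
  then show ?thesis by simp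
qed

lemma rc_Brho:
  assumes s: "0 \<le> s" and st: "s \<le> t" and f: "f \<in> B_rho \<rho>" and B: "B \<in> sets (rc_filtration M X s)"
  shows "(\<integral>\<omega>. indicator B \<omega> * f (X t \<omega>) \<partial>P x) = (\<integral>\<omega>. indicator B \<omega> * Qt (t - s) f (X s \<omega>) \<partial>P x)"
proof (cases "s = t")
  case True
  then show ?thesis using Qt_0[OF f] by simp
next
  case False
  then have st': "s < t" using st by simp
  define r where "r = t - s"
  have r: "0 \<le> r" using st by (simp add: r_def)
  have t: "0 \<le> t" using s st by simp
  have BM: "B \<in> sets M" using B sets_rc_M by blast
  have fm: "f \<in> borel_measurable borel" by (rule B_rho_meas[OF f])
  have fb: "\<forall>y. \<bar>f y\<bar> \<le> rho_norm \<rho> f * \<rho> y" using B_rho_bound[OF f] by blast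
  have rb: "\<forall>y. \<bar>\<rho> y\<bar> \<le> 1 * \<rho> y" using rho_pos by (simp add: less_imp_le)
  define I where "I = (\<integral>\<omega>. \<rho> (X t \<omega>) \<partial>P x)"
  have I: "0 \<le> I" unfolding I_def by (rule integral_nonneg_AE) (simp add: less_imp_le[OF rho_pos])
  have IQ: "(\<integral>\<omega>. Qt r \<rho> (X s \<omega>) \<partial>P x) = I"
  proof -
    have "(\<integral>\<omega>. indicator (space M) \<omega> * \<rho> (X t \<omega>) \<partial>P x) = (\<integral>\<omega>. indicator (space M) \<omega> * Qt (t - s) \<rho> (X s \<omega>) \<partial>P x)"
      by (rule real_markov_P(1)[OF s st space_in_nf rho_meas rb])
    then show ?thesis by (simp add: ind_space I_def r_def)
  qed
  show ?thesis
  proof (rule eps_zero[where K="2 * I", THEN eq_iff_diff_eq_0[THEN iffD2]])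
    show "0 \<le> 2 * I" using I by simp
    fix d :: real assume d: "0 < d"
    obtain h where h: "h \<in> C0" "\<forall>y. \<bar>f y - h y\<bar> \<le> d * \<rho> y" using C0_dense[OF f d] by blast
    have hm: "h \<in> borel_measurable borel" by (rule C0_meas[OF h(1)])
    obtain ch where ch: "\<forall>z. \<bar>h z\<bar> \<le> ch * \<rho> z" using C0_rho[OF h(1)] by blast
    have dfh: "(\<lambda>y. f y - h y) \<in> borel_measurable borel" using fm hm by simp
    have eqh: "(\<integral>\<omega>. indicator B \<omega> * h (X t \<omega>) \<partial>P x) = (\<integral>\<omega>. indicator B \<omega> * Qt r h (X s \<omega>) \<partial>P x)"
      unfolding r_def by (rule rc_C0[OF s st' h(1) B])
    have iLf: "integrable (P x) (\<lambda>\<omega>. indicator B \<omega> * f (X t \<omega>))" by (rule int_ind[OF BM int_gX[OF t fm fb]])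
    have iLh: "integrable (P x) (\<lambda>\<omega>. indicator B \<omega> * h (X t \<omega>))" by (rule int_ind[OF BM int_gX[OF t hm ch]])
    have iRf: "integrable (P x) (\<lambda>\<omega>. indicator B \<omega> * Qt r f (X s \<omega>))" by (rule int_ind[OF BM int_QX[OF s r fm fb]])
    have iRh: "integrable (P x) (\<lambda>\<omega>. indicator B \<omega> * Qt r h (X s \<omega>))" by (rule int_ind[OF BM int_QX[OF s r hm ch]])
    have L: "\<bar>(\<integral>\<omega>. indicator B \<omega> * f (X t \<omega>) \<partial>P x) - (\<integral>\<omega>. indicator B \<omega> * h (X t \<omega>) \<partial>P x)\<bar> \<le> d * I"
    proof -
      have "(\<integral>\<omega>. indicator B \<omega> * f (X t \<omega>) \<partial>P x) - (\<integral>\<omega>. indicator B \<omega> * h (X t \<omega>) \<partial>P x)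
          = (\<integral>\<omega>. indicator B \<omega> * f (X t \<omega>) - indicator B \<omega> * h (X t \<omega>) \<partial>P x)"
        by (rule Bochner_Integration.integral_diff[OF iLf iLh, symmetric])
      also have "\<bar>\<dots>\<bar> \<le> (\<integral>\<omega>. d * \<rho> (X t \<omega>) \<partial>P x)"
      proof (rule abs_int_le)
        show "integrable (P x) (\<lambda>\<omega>. indicator B \<omega> * f (X t \<omega>) - indicator B \<omega> * h (X t \<omega>))" using iLf iLh by simp
        show "integrable (P x) (\<lambda>\<omega>. d * \<rho> (X t \<omega>))" using int_rhoX[OF t] by simp
        fix \<omega> show "\<bar>indicator B \<omega> * f (X t \<omega>) - indicator B \<omega> * h (X t \<omega>)\<bar> \<le> d * \<rho> (X t \<omega>)"
          using h(2)[rule_format, of "X t \<omega>"] d rho_pos[of "X t \<omega>"] by (auto simp: indicator_def)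
      qed
      also have "\<dots> = d * I" by (simp add: I_def)
      finally show ?thesis .
    qed
    have R: "\<bar>(\<integral>\<omega>. indicator B \<omega> * Qt r f (X s \<omega>) \<partial>P x) - (\<integral>\<omega>. indicator B \<omega> * Qt r h (X s \<omega>) \<partial>P x)\<bar> \<le> d * I"
    proof -
      have "(\<integral>\<omega>. indicator B \<omega> * Qt r f (X s \<omega>) \<partial>P x) - (\<integral>\<omega>. indicator B \<omega> * Qt r h (X s \<omega>) \<partial>P x)
          = (\<integral>\<omega>. indicator B \<omega> * Qt r f (X s \<omega>) - indicator B \<omega> * Qt r h (X s \<omega>) \<partial>P x)"
        by (rule Bochner_Integration.integral_diff[OF iRf iRh, symmetric])
      also have "\<bar>\<dots>\<bar> \<le> (\<integral>\<omega>. d * Qt r \<rho> (X s \<omega>) \<partial>P x)"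
      proof (rule abs_int_le)
        show "integrable (P x) (\<lambda>\<omega>. indicator B \<omega> * Qt r f (X s \<omega>) - indicator B \<omega> * Qt r h (X s \<omega>))" using iRf iRh by simp
        show "integrable (P x) (\<lambda>\<omega>. d * Qt r \<rho> (X s \<omega>))" using int_QX[OF s r rho_meas rb] by simp
        fix \<omega>
        have "Qt r f (X s \<omega>) - Qt r h (X s \<omega>) = Qt r (\<lambda>y. f y - h y) (X s \<omega>)"
          by (rule Qt_diff[OF r fm hm fb ch, symmetric])
        moreover have "\<bar>Qt r (\<lambda>y. f y - h y) (X s \<omega>)\<bar> \<le> d * Qt r \<rho> (X s \<omega>)"
          using Qt_bound_gen[OF r dfh h(2)] by (simp add: Qt_def)
        moreover have "0 \<le> Qt r \<rho> (X s \<omega>)" by (rule Qt_pos) (simp add: less_imp_le[OF rho_pos])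
        ultimately show "\<bar>indicator B \<omega> * Qt r f (X s \<omega>) - indicator B \<omega> * Qt r h (X s \<omega>)\<bar> \<le> d * Qt r \<rho> (X s \<omega>)"
          using d by (auto simp: indicator_def)
      qed
      also have "\<dots> = d * I" using IQ by simp
      finally show ?thesis .
    qed
    show "\<bar>(\<integral>\<omega>. indicator B \<omega> * f (X t \<omega>) \<partial>P x) - (\<integral>\<omega>. indicator B \<omega> * Qt (t - s) f (X s \<omega>) \<partial>P x)\<bar> \<le> d * (2 * I)"
      using L R eqh by (simp add: r_def)
  qed
qed




lemma part_rc: assumes st: "0 \<le> s" "s \<le> t" and f: "f \<in> B_rho \<rho>"
  shows "integrable (P x) (\<lambda>\<omega>. f (X t \<omega>)) \<and>
    (AE \<omega> in P x. real_cond_exp (P x) (rc_filtration M X s) (\<lambda>\<omega>'. f (X t \<omega>')) \<omega> = (\<integral>y. f y \<partial>p (t - s) (X s \<omega>)))"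
proof -
  have t: "0 \<le> t" "0 \<le> t - s" using st by auto
  have fm: "f \<in> borel_measurable borel" by (rule B_rho_meas[OF f])
  have fb: "\<forall>y. \<bar>f y\<bar> \<le> rho_norm \<rho> f * \<rho> y" using B_rho_bound[OF f] by blast
  have i1: "integrable (P x) (\<lambda>\<omega>. f (X t \<omega>))" by (rule int_gX[OF t(1) fm fb])
  have i2: "integrable (P x) (\<lambda>\<omega>. Qt (t - s) f (X s \<omega>))" by (rule int_QX[OF st(1) t(2) fm fb])
  have kF: "(\<lambda>\<omega>. Qt (t - s) f (X s \<omega>)) \<in> borel_measurable (rc_filtration M X s)"
    by (rule measurable_compose[OF X_meas_rc[OF st(1)] Qt_meas[OF t(2) fm]])
  have "AE \<omega> in P x. real_cond_exp (P x) (rc_filtration M X s) (\<lambda>\<omega>. f (X t \<omega>)) \<omega> = Qt (t - s) f (X s \<omega>)"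
    by (rule ce_charact[OF sfs_rc i1 i2 kF]) (rule rc_Brho[OF st f])
  then show ?thesis using i1 unfolding Qt_def by blast
qed

lemma main: "(\<forall>t\<ge>0. \<forall>x. \<forall>f\<in>B_rho \<rho>. integrable (p t x) f)
       \<and> gen_feller_semigroup \<rho> (\<lambda>t f x. \<integral>y. f y \<partial>p t x)
       \<and> (\<forall>s\<ge>0. \<forall>t\<ge>s. \<forall>f\<in>B_rho \<rho>.
            integrable (\<nu> \<bind> P) (\<lambda>\<omega>. f (X t \<omega>)) \<and>
            (AE \<omega> in \<nu> \<bind> P. real_cond_exp (\<nu> \<bind> P) (nat_filtration M X s) (\<lambda>\<omega>'. f (X t \<omega>')) \<omega>
                  = (\<integral>y. f y \<partial>p (t - s) (X s \<omega>))))
       \<and> (\<forall>x. \<forall>s\<ge>0. \<forall>t\<ge>s. \<forall>f\<in>B_rho \<rho>.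
            integrable (P x) (\<lambda>\<omega>. f (X t \<omega>)) \<and>
            (AE \<omega> in P x. real_cond_exp (P x) (rc_filtration M X s) (\<lambda>\<omega>'. f (X t \<omega>')) \<omega>
                  = (\<integral>y. f y \<partial>p (t - s) (X s \<omega>))))"
  using Brho_int gfs part_nu part_rc unfolding Qt_eq by blast

end

theorem mainTheorem10:
  fixes \<rho> :: "'a::t2_space \<Rightarrow> real"
    and M :: "'w measure"
    and P :: "'a \<Rightarrow> 'w measure"
    and X :: "real \<Rightarrow> 'w \<Rightarrow> 'a"
    and p :: "real \<Rightarrow> 'a \<Rightarrow> 'a measure"
    and \<nu> :: "'a measure"
    and t0 C :: real
  assumes "completely_regular_space (euclidean :: 'a topology)"
    and "locally_compact_space (euclidean :: 'a topology)"
    and "admissible_weight \<rho>"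
    and "feller_process M P X p"
    and "radon_prob \<nu>"
    and "(\<integral>\<^sup>+ x. ennreal (\<rho> x) \<partial>\<nu>) < \<infinity>"
    and "t0 > 0" and "C > 0"
    and "\<forall>x. \<forall>t\<in>{0..t0}. (\<integral>\<^sup>+ \<omega>. ennreal (\<rho> (X t \<omega>)) \<partial>P x) \<le> ennreal (C * \<rho> x)"
  shows "(\<forall>t\<ge>0. \<forall>x. \<forall>f\<in>B_rho \<rho>. integrable (p t x) f)
       \<and> gen_feller_semigroup \<rho> (\<lambda>t f x. \<integral>y. f y \<partial>p t x)
       \<and> (\<forall>s\<ge>0. \<forall>t\<ge>s. \<forall>f\<in>B_rho \<rho>.
            integrable (\<nu> \<bind> P) (\<lambda>\<omega>. f (X t \<omega>)) \<and>
            (AE \<omega> in \<nu> \<bind> P. real_cond_exp (\<nu> \<bind> P) (nat_filtration M X s) (\<lambda>\<omega>'. f (X t \<omega>')) \<omega>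
                  = (\<integral>y. f y \<partial>p (t - s) (X s \<omega>))))
       \<and> (\<forall>x. \<forall>s\<ge>0. \<forall>t\<ge>s. \<forall>f\<in>B_rho \<rho>.
            integrable (P x) (\<lambda>\<omega>. f (X t \<omega>)) \<and>
            (AE \<omega> in P x. real_cond_exp (P x) (rc_filtration M X s) (\<lambda>\<omega>'. f (X t \<omega>')) \<omega>
                  = (\<integral>y. f y \<partial>p (t - s) (X s \<omega>))))"
proof -
  interpret GF \<rho> M P X p \<nu> t0 C
    by unfold_locales (use assms in auto)
  show ?thesis by (rule main)
qed

end
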